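(* Let $\mathfrak d=\mathfrak n^-\oplus\mathfrak k\oplus\mathfrak h\oplus\mathfrak n^+$ be the Lie algebra described in the context, built from a finite dimensional simple Lie algebra $\mathfrak g$ and a skew symmetric bilinear form $u$ on $\mathfrak h^*$. (a) Let $\mathrm{rad}(u)=\{\lambda\in\mathfrak h^*\mid u(\lambda,\mu)=0 \text{ for all }\mu\in\mathfrak h^*\}$ and let $\mathfrak l$ be the subspace of $\mathfrak d$ spanned by all $h_\lambda-k_\lambda$ with $\lambda\in\mathrm{rad}(u)$. Then $\mathfrak l$ is a solvable ideal of $\mathfrak d$. In particular, if $u=0$, then $\mathfrak l$ is the maximal solvable ideal of $\mathfrak d$ and $\mathfrak d/\mathfrak l$ is isomorphic to $\mathfrak g$. (b) Let $\mathfrak m$ be the subspace of $\mathfrak d$ spanned by all root vectors $x_\alpha\in\mathfrak n^-\oplus\mathfrak n^+$ and all elements $h_\lambda+k_\lambda$, $\lambda\in\mathfrak h^*$. Then $\mathfrak m$ is an ideal of $\mathfrak d$ isomorphic to $\mathfrak g$.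
   Context: Let $C=(a_{ij})_{n\times n}$ be an indecomposable symmetrizable generalized Cartan matrix of finite type, and $D=\mathrm{diag}(d_1,\dots,d_n)$ with positive integers $d_i$ such that $DC$ is symmetric positive definite. Let $\mathfrak g$ be the finite dimensional simple complex Lie algebra (bracket $[\cdot,\cdot]_{\mathfrak g}$) associated to $C$, $\mathfrak h$ a Cartan subalgebra with simple roots $\alpha_1,\dots,\alpha_n$, and $h_i\in\mathfrak h$ with $\alpha_j(h_i)=a_{ij}$; $\mathfrak g$ is generated by $h_i,x_{\pm\alpha_i}$ with $[h_i,x_{\pm\alpha_j}]_{\mathfrak g}=\pm a_{ij}x_{\pm\alpha_j}$, $[x_{\alpha_i},x_{-\alpha_j}]_{\mathfrak g}=\delta_{ij}h_i$ and the Serre relations. Let $\mathfrak n^+$ (resp. $\mathfrak n^-$) be the span of root vectors with positive (resp. negative) roots, $\mathfrak n=\mathfrak n^-\oplus\mathfrak n^+$; $x_\alpha$ always denotes a root vector of root $\alpha$. Let $(\cdot|\cdot)$ be the symmetric bilinear form on $\mathfrak h^*$ with $(\alpha_i|\alpha_j)=d_ia_{ij}$; for $\lambda\in\mathfrak h^*$ let $h_\lambda\in\mathfrak h$ be defined by $\alpha_i(h_\lambda)=(\alpha_i|\lambda)$ for all $i$. This gives a form on $\mathfrak h$, $(h_\lambda|h_\mu)=(\lambda|\mu)=\lambda(h_\mu)$, extended to the nondegenerate $\mathfrak g$-invariant symmetric form on $\mathfrak g$ with $(h_i|h_j)=d_j^{-1}a_{ij}$, $(h|x_\alpha)=0$,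 $(x_\alpha|x_\beta)=0$ if $\alpha+\beta\neq0$, $(x_{\alpha_i}|x_{-\alpha_j})=d_i^{-1}\delta_{ij}$. Let $u=(u_{ij})$ be a skew symmetric complex $n\times n$ matrix, giving $u(\lambda,\mu)=\sum_{i,j}u_{ij}\lambda(h_i)\mu(h_j)$ on $\mathfrak h^*$; let $\Phi:\mathfrak h^*\to\mathfrak h^*$ be the linear map with $u(\lambda,\mu)=(\Phi\lambda|\mu)$, and $\Phi_\pm=\Phi\pm I$. Let $\mathfrak k$ be a vector space with a linear isomorphism $\varphi:\mathfrak h\to\mathfrak k$, and $k_\lambda=\varphi(h_\lambda)$. Let $\mathfrak g'=\mathfrak n^-\oplus\mathfrak k\oplus\mathfrak n^+$ be the Lie algebra (isomorphic to $\mathfrak g$) with bracket $[k_\lambda,k_\mu]_{\mathfrak g'}=0$, $[k_\lambda,x_\alpha]_{\mathfrak g'}=(\alpha|\lambda)x_\alpha$, $[x_\alpha,x_\beta]_{\mathfrak g'}=[x_\alpha,x_\beta]_{\mathfrak g}$ for $\alpha\neq-\beta$, $[x_\alpha,x_{-\alpha}]_{\mathfrak g'}=\varphi([x_\alpha,x_{-\alpha}]_{\mathfrak g})$. Then $\mathfrak d=\mathfrak n^-\oplus\mathfrak k\oplus\mathfrak h\oplus\mathfrak n^+$ is the Lie algebra with bracket: $[h_\lambda,h_\mu]=[h_\lambda,k_\mu]=[k_\lambda,k_\mu]=0$, $[h_\lambda,x_\alpha]=-(\Phi_-\lambda|\alpha)x_\alpha$, $[k_\lambda,x_\alpha]=(\Phi_+\lambda|\alpha)x_\alpha$,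 $[x_\alpha,x_\beta]=\tfrac12([x_\alpha,x_\beta]_{\mathfrak g}+[x_\alpha,x_\beta]_{\mathfrak g'})$ for all $\lambda,\mu\in\mathfrak h^*$ and root vectors $x_\alpha,x_\beta\in\mathfrak n$. *)

theory Defs
  imports Complex_Main "HOL-Library.Product_Plus"
begin

definition lin_span :: "(complex \<Rightarrow> 'v::ab_group_add \<Rightarrow> 'v) \<Rightarrow> 'v set \<Rightarrow> 'v set" where
  "lin_span sc S = \<Inter>{W. S \<subseteq> W \<and> 0 \<in> W \<and> (\<forall>x\<in>W. \<forall>y\<in>W. x + y \<in> W)
                        \<and> (\<forall>c. \<forall>x\<in>W. sc c x \<in> W)}"

definition is_subspace :: "(complex \<Rightarrow> 'v::ab_group_add \<Rightarrow> 'v) \<Rightarrow> 'v set \<Rightarrow> bool" where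
  "is_subspace sc W \<longleftrightarrow> 0 \<in> W \<and> (\<forall>x\<in>W. \<forall>y\<in>W. x + y \<in> W) \<and> (\<forall>c. \<forall>x\<in>W. sc c x \<in> W)"

definition lie_algebra :: "'v::ab_group_add set \<Rightarrow> (complex \<Rightarrow> 'v \<Rightarrow> 'v) \<Rightarrow> ('v \<Rightarrow> 'v \<Rightarrow> 'v) \<Rightarrow> bool" where
  "lie_algebra V sc br \<longleftrightarrow> is_subspace sc V
     \<and> (\<forall>x\<in>V. \<forall>y\<in>V. br x y \<in> V)
     \<and> (\<forall>x\<in>V. \<forall>y\<in>V. \<forall>z\<in>V. br (x + y) z = br x z + br y z \<and> br x (y + z) = br x y + br x z)
     \<and> (\<forall>c. \<forall>x\<in>V. \<forall>y\<in>V. br (sc c x) y = sc c (br x y) \<and> br x (sc c y) = sc c (br x y))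
     \<and> (\<forall>x\<in>V. br x x = 0)
     \<and> (\<forall>x\<in>V. \<forall>y\<in>V. \<forall>z\<in>V. br x (br y z) + br y (br z x) + br z (br x y) = 0)"

definition is_ideal :: "'v::ab_group_add set \<Rightarrow> (complex \<Rightarrow> 'v \<Rightarrow> 'v) \<Rightarrow> ('v \<Rightarrow> 'v \<Rightarrow> 'v) \<Rightarrow> 'v set \<Rightarrow> bool" where
  "is_ideal V sc br I \<longleftrightarrow> I \<subseteq> V \<and> is_subspace sc I \<and> (\<forall>x\<in>V. \<forall>y\<in>I. br x y \<in> I)"

fun derived :: "(complex \<Rightarrow> 'v::ab_group_add \<Rightarrow> 'v) \<Rightarrow> ('v \<Rightarrow> 'v \<Rightarrow> 'v) \<Rightarrow> 'v set \<Rightarrow> nat \<Rightarrow> 'v set" where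
  "derived sc br L 0 = L"
| "derived sc br L (Suc k) =
     lin_span sc {br x y | x y. x \<in> derived sc br L k \<and> y \<in> derived sc br L k}"

definition solvable :: "(complex \<Rightarrow> 'v::ab_group_add \<Rightarrow> 'v) \<Rightarrow> ('v \<Rightarrow> 'v \<Rightarrow> 'v) \<Rightarrow> 'v set \<Rightarrow> bool" where
  "solvable sc br L \<longleftrightarrow> (\<exists>k. derived sc br L k = {0})"

definition max_solvable_ideal :: "'v::ab_group_add set \<Rightarrow> (complex \<Rightarrow> 'v \<Rightarrow> 'v) \<Rightarrow> ('v \<Rightarrow> 'v \<Rightarrow> 'v) \<Rightarrow> 'v set \<Rightarrow> bool" where
  "max_solvable_ideal V sc br I \<longleftrightarrow> is_ideal V sc br I \<and> solvable sc br I
     \<and> (\<forall>J. is_ideal V sc br J \<and> solvable sc br J \<longrightarrow> J \<subseteq> I)"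

definition simple_lie :: "(complex \<Rightarrow> 'v::ab_group_add \<Rightarrow> 'v) \<Rightarrow> ('v \<Rightarrow> 'v \<Rightarrow> 'v) \<Rightarrow> bool" where
  "simple_lie sc br \<longleftrightarrow> lie_algebra UNIV sc br \<and> (\<exists>x y. br x y \<noteq> 0)
     \<and> (\<forall>I. is_ideal UNIV sc br I \<longrightarrow> I = {0} \<or> I = UNIV)"

definition lie_generated :: "(complex \<Rightarrow> 'v::ab_group_add \<Rightarrow> 'v) \<Rightarrow> ('v \<Rightarrow> 'v \<Rightarrow> 'v) \<Rightarrow> 'v set \<Rightarrow> 'v set" where
  "lie_generated sc br S = \<Inter>{W. S \<subseteq> W \<and> is_subspace sc W \<and> (\<forall>x\<in>W. \<forall>y\<in>W. br x y \<in> W)}"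

definition lie_iso :: "'a set \<Rightarrow> ('a \<Rightarrow> 'a \<Rightarrow> 'a) \<Rightarrow> (complex \<Rightarrow> 'a \<Rightarrow> 'a) \<Rightarrow> ('a \<Rightarrow> 'a \<Rightarrow> 'a)
     \<Rightarrow> 'b set \<Rightarrow> ('b \<Rightarrow> 'b \<Rightarrow> 'b) \<Rightarrow> (complex \<Rightarrow> 'b \<Rightarrow> 'b) \<Rightarrow> ('b \<Rightarrow> 'b \<Rightarrow> 'b) \<Rightarrow> ('a \<Rightarrow> 'b) \<Rightarrow> bool" where
  "lie_iso A addA scA brA B addB scB brB f \<longleftrightarrow> bij_betw f A B
     \<and> (\<forall>x\<in>A. \<forall>y\<in>A. f (addA x y) = addB (f x) (f y) \<and> f (brA x y) = brB (f x) (f y))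
     \<and> (\<forall>c. \<forall>x\<in>A. f (scA c x) = scB c (f x))"

definition coset :: "'v::ab_group_add set \<Rightarrow> 'v \<Rightarrow> 'v set" where
  "coset I x = {x + i | i. i \<in> I}"

definition quot_carrier :: "'v::ab_group_add set \<Rightarrow> 'v set \<Rightarrow> 'v set set" where
  "quot_carrier V I = coset I ` V"

definition quot_add :: "'v::ab_group_add set \<Rightarrow> 'v set \<Rightarrow> 'v set \<Rightarrow> 'v set" where
  "quot_add I A B = {a + b + i | a b i. a \<in> A \<and> b \<in> B \<and> i \<in> I}"

definition quot_scale :: "(complex \<Rightarrow> 'v::ab_group_add \<Rightarrow> 'v) \<Rightarrow> 'v set \<Rightarrow> complex \<Rightarrow> 'v set \<Rightarrow> 'v set" where
  "quot_scale sc I c A = {sc c a + i | a i. a \<in> A \<and> i \<in> I}"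

definition quot_br :: "('v::ab_group_add \<Rightarrow> 'v \<Rightarrow> 'v) \<Rightarrow> 'v set \<Rightarrow> 'v set \<Rightarrow> 'v set \<Rightarrow> 'v set" where
  "quot_br br I A B = {br a b + i | a b i. a \<in> A \<and> b \<in> B \<and> i \<in> I}"

text \<open>\<open>C = (a_ij)\<close> for \<open>i,j < n\<close>, \<open>D = diag(d_0,...,d_(n-1))\<close>.\<close>
definition gcm_finite_type_sym :: "nat \<Rightarrow> (nat \<Rightarrow> nat \<Rightarrow> int) \<Rightarrow> (nat \<Rightarrow> nat) \<Rightarrow> bool" where
  "gcm_finite_type_sym n C d \<longleftrightarrow> n \<ge> 1
     \<and> (\<forall>i<n. C i i = 2)
     \<and> (\<forall>i<n. \<forall>j<n. i \<noteq> j \<longrightarrow> C i j \<le> 0)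
     \<and> (\<forall>i<n. \<forall>j<n. C i j = 0 \<longleftrightarrow> C j i = 0)
     \<and> (\<forall>I. I \<subseteq> {..<n} \<and> I \<noteq> {} \<and> I \<noteq> {..<n} \<longrightarrow> (\<exists>i\<in>I. \<exists>j\<in>{..<n} - I. C i j \<noteq> 0))
     \<and> (\<forall>i<n. d i > 0)
     \<and> (\<forall>i<n. \<forall>j<n. int (d i) * C i j = int (d j) * C j i)
     \<and> (\<forall>x::nat \<Rightarrow> real. (\<exists>i<n. x i \<noteq> 0) \<longrightarrow>
          (\<Sum>i<n. \<Sum>j<n. x i * real (d i) * real_of_int (C i j) * x j) > 0)"

text \<open>\<open>g\<close> is the whole type \<open>'g\<close> with scalar multiplication \<open>sc\<close> and bracket \<open>br\<close>;
  \<open>hh i = h_i\<close>, \<open>xp i = x_(\<alpha>_i)\<close>, \<open>xm i = x_(-\<alpha>_i)\<close>.\<close>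
definition chevalley_serre :: "nat \<Rightarrow> (nat \<Rightarrow> nat \<Rightarrow> int) \<Rightarrow> (complex \<Rightarrow> 'g::ab_group_add \<Rightarrow> 'g) \<Rightarrow> ('g \<Rightarrow> 'g \<Rightarrow> 'g)
     \<Rightarrow> (nat \<Rightarrow> 'g) \<Rightarrow> (nat \<Rightarrow> 'g) \<Rightarrow> (nat \<Rightarrow> 'g) \<Rightarrow> bool" where
  "chevalley_serre n C sc br hh xp xm \<longleftrightarrow>
     lie_generated sc br ({hh i | i. i < n} \<union> {xp i | i. i < n} \<union> {xm i | i. i < n}) = UNIV
   \<and> (\<forall>i<n. \<forall>j<n. br (hh i) (hh j) = 0)
   \<and> (\<forall>i<n. \<forall>j<n. br (hh i) (xp j) = sc (of_int (C i j)) (xp j))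
   \<and> (\<forall>i<n. \<forall>j<n. br (hh i) (xm j) = sc (- of_int (C i j)) (xm j))
   \<and> (\<forall>i<n. \<forall>j<n. br (xp i) (xm j) = (if i = j then hh i else 0))
   \<and> (\<forall>i<n. \<forall>j<n. i \<noteq> j \<longrightarrow> (br (xp i) ^^ nat (1 - C i j)) (xp j) = 0)
   \<and> (\<forall>i<n. \<forall>j<n. i \<noteq> j \<longrightarrow> (br (xm i) ^^ nat (1 - C i j)) (xm j) = 0)"

definition hset :: "nat \<Rightarrow> (complex \<Rightarrow> 'g::ab_group_add \<Rightarrow> 'g) \<Rightarrow> (nat \<Rightarrow> 'g) \<Rightarrow> 'g set" where
  "hset n sc hh = lin_span sc {hh i | i. i < n}"

text \<open>\<open>h^*\<close>: linear functionals on \<open>h\<close>, normalised to vanish outside \<open>h\<close>.\<close>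
definition hdual :: "nat \<Rightarrow> (complex \<Rightarrow> 'g::ab_group_add \<Rightarrow> 'g) \<Rightarrow> (nat \<Rightarrow> 'g) \<Rightarrow> ('g \<Rightarrow> complex) set" where
  "hdual n sc hh = {lam. (\<forall>x\<in>hset n sc hh. \<forall>y\<in>hset n sc hh. lam (x + y) = lam x + lam y)
       \<and> (\<forall>c. \<forall>x\<in>hset n sc hh. lam (sc c x) = c * lam x)
       \<and> (\<forall>x. x \<notin> hset n sc hh \<longrightarrow> lam x = 0)}"

definition simple_root :: "nat \<Rightarrow> (nat \<Rightarrow> nat \<Rightarrow> int) \<Rightarrow> (complex \<Rightarrow> 'g::ab_group_add \<Rightarrow> 'g) \<Rightarrow> (nat \<Rightarrow> 'g) \<Rightarrow> nat \<Rightarrow> ('g \<Rightarrow> complex)" where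
  "simple_root n C sc hh i = (THE lam. lam \<in> hdual n sc hh \<and> (\<forall>j<n. lam (hh j) = of_int (C j i)))"

definition rootspace :: "nat \<Rightarrow> (complex \<Rightarrow> 'g::ab_group_add \<Rightarrow> 'g) \<Rightarrow> ('g \<Rightarrow> 'g \<Rightarrow> 'g) \<Rightarrow> (nat \<Rightarrow> 'g) \<Rightarrow> ('g \<Rightarrow> complex) \<Rightarrow> 'g set" where
  "rootspace n sc br hh \<alpha> = {x. \<forall>H\<in>hset n sc hh. br H x = sc (\<alpha> H) x}"

definition is_root :: "nat \<Rightarrow> (complex \<Rightarrow> 'g::ab_group_add \<Rightarrow> 'g) \<Rightarrow> ('g \<Rightarrow> 'g \<Rightarrow> 'g) \<Rightarrow> (nat \<Rightarrow> 'g) \<Rightarrow> ('g \<Rightarrow> complex) \<Rightarrow> bool" where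
  "is_root n sc br hh \<alpha> \<longleftrightarrow> \<alpha> \<in> hdual n sc hh \<and> \<alpha> \<noteq> (\<lambda>_. 0) \<and> rootspace n sc br hh \<alpha> \<noteq> {0}"

definition pos_root :: "nat \<Rightarrow> (nat \<Rightarrow> nat \<Rightarrow> int) \<Rightarrow> (complex \<Rightarrow> 'g::ab_group_add \<Rightarrow> 'g) \<Rightarrow> ('g \<Rightarrow> 'g \<Rightarrow> 'g) \<Rightarrow> (nat \<Rightarrow> 'g) \<Rightarrow> ('g \<Rightarrow> complex) \<Rightarrow> bool" where
  "pos_root n C sc br hh \<alpha> \<longleftrightarrow> is_root n sc br hh \<alpha>
     \<and> (\<exists>c::nat \<Rightarrow> nat. \<forall>H\<in>hset n sc hh. \<alpha> H = (\<Sum>i<n. of_nat (c i) * simple_root n C sc hh i H))"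

definition neg_root :: "nat \<Rightarrow> (nat \<Rightarrow> nat \<Rightarrow> int) \<Rightarrow> (complex \<Rightarrow> 'g::ab_group_add \<Rightarrow> 'g) \<Rightarrow> ('g \<Rightarrow> 'g \<Rightarrow> 'g) \<Rightarrow> (nat \<Rightarrow> 'g) \<Rightarrow> ('g \<Rightarrow> complex) \<Rightarrow> bool" where
  "neg_root n C sc br hh \<alpha> \<longleftrightarrow> is_root n sc br hh \<alpha> \<and> pos_root n C sc br hh (\<lambda>x. - \<alpha> x)"

definition nplus where
  "nplus n C sc br hh = lin_span sc (\<Union>{rootspace n sc br hh \<alpha> | \<alpha>. pos_root n C sc br hh \<alpha>})"

definition nminus where
  "nminus n C sc br hh = lin_span sc (\<Union>{rootspace n sc br hh \<alpha> | \<alpha>. neg_root n C sc br hh \<alpha>})"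

definition nset where
  "nset n C sc br hh = {a + b | a b. a \<in> nminus n C sc br hh \<and> b \<in> nplus n C sc br hh}"

text \<open>\<open>h_\<mu>\<close>: the element of \<open>h\<close> with \<open>\<alpha>_i(h_\<mu>) = (\<alpha>_i|\<mu>) = d_i \<mu>(h_i)\<close>.\<close>
definition hvec :: "nat \<Rightarrow> (nat \<Rightarrow> nat \<Rightarrow> int) \<Rightarrow> (nat \<Rightarrow> nat) \<Rightarrow> (complex \<Rightarrow> 'g::ab_group_add \<Rightarrow> 'g) \<Rightarrow> (nat \<Rightarrow> 'g) \<Rightarrow> ('g \<Rightarrow> complex) \<Rightarrow> 'g" where
  "hvec n C d sc hh \<mu> = (THE H. H \<in> hset n sc hh
      \<and> (\<forall>i<n. simple_root n C sc hh i H = of_nat (d i) * \<mu> (hh i)))"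

text \<open>The form \<open>(lam|\<mu>) = lam(h_\<mu>)\<close> on \<open>h^*\<close> (so that \<open>(\<alpha>_i|\<alpha>_j) = d_i a_ij\<close>).\<close>
definition hform where
  "hform n C d sc hh lam \<mu> = lam (hvec n C d sc hh \<mu>)"

definition uform :: "nat \<Rightarrow> (nat \<Rightarrow> nat \<Rightarrow> complex) \<Rightarrow> (nat \<Rightarrow> 'g) \<Rightarrow> ('g \<Rightarrow> complex) \<Rightarrow> ('g \<Rightarrow> complex) \<Rightarrow> complex" where
  "uform n u hh lam \<mu> = (\<Sum>i<n. \<Sum>j<n. u i j * lam (hh i) * \<mu> (hh j))"

definition Phi where
  "Phi n C d u sc hh lam = (THE \<psi>. \<psi> \<in> hdual n sc hh
      \<and> (\<forall>\<mu>\<in>hdual n sc hh. hform n C d sc hh \<psi> \<mu> = uform n u hh lam \<mu>))"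

definition Phi_plus where
  "Phi_plus n C d u sc hh lam = (\<lambda>x. Phi n C d u sc hh lam x + lam x)"

definition Phi_minus where
  "Phi_minus n C d u sc hh lam = (\<lambda>x. Phi n C d u sc hh lam x - lam x)"

definition rad_u where
  "rad_u n u sc hh = {lam\<in>hdual n sc hh. \<forall>\<mu>\<in>hdual n sc hh. uform n u hh lam \<mu> = 0}"

text \<open>Elements of \<open>d = n^- \<oplus> k \<oplus> h \<oplus> n^+\<close> are represented as triples \<open>(y, H, K)\<close> with
  \<open>y \<in> n\<close>, \<open>H \<in> h\<close>, \<open>K \<in> h\<close>; the third component represents \<open>k = \<phi>(h)\<close>, i.e. \<open>(0,0,K)\<close> stands
  for \<open>\<phi>(K)\<close>.\<close>
definition dset where
  "dset n C sc br hh = nset n C sc br hh \<times> hset n sc hh \<times> hset n sc hh"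

definition dscale :: "(complex \<Rightarrow> 'g \<Rightarrow> 'g) \<Rightarrow> complex \<Rightarrow> 'g \<times> 'g \<times> 'g \<Rightarrow> 'g \<times> 'g \<times> 'g" where
  "dscale sc c v = (sc c (fst v), sc c (fst (snd v)), sc c (snd (snd v)))"

definition hD where "hD n C d sc hh lam = (0, hvec n C d sc hh lam, 0)"
definition kD where "kD n C d sc hh lam = (0, 0, hvec n C d sc hh lam)"
definition xD :: "'g::zero \<Rightarrow> 'g \<times> 'g \<times> 'g" where "xD x = (x, 0, 0)"

definition d_bracket where
  "d_bracket n C d u sc br hh brd \<longleftrightarrow>
     lie_algebra (dset n C sc br hh) (dscale sc) brd
   \<and> (\<forall>lam\<in>hdual n sc hh. \<forall>\<mu>\<in>hdual n sc hh.
        brd (hD n C d sc hh lam) (hD n C d sc hh \<mu>) = 0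
      \<and> brd (hD n C d sc hh lam) (kD n C d sc hh \<mu>) = 0
      \<and> brd (kD n C d sc hh lam) (kD n C d sc hh \<mu>) = 0)
   \<and> (\<forall>lam\<in>hdual n sc hh. \<forall>\<alpha>. is_root n sc br hh \<alpha> \<longrightarrow> (\<forall>x\<in>rootspace n sc br hh \<alpha>.
        brd (hD n C d sc hh lam) (xD x)
          = dscale sc (- hform n C d sc hh (Phi_minus n C d u sc hh lam) \<alpha>) (xD x)
      \<and> brd (kD n C d sc hh lam) (xD x)
          = dscale sc (hform n C d sc hh (Phi_plus n C d u sc hh lam) \<alpha>) (xD x)))
   \<and> (\<forall>\<alpha> \<beta>. is_root n sc br hh \<alpha> \<and> is_root n sc br hh \<beta> \<and> (\<lambda>x. \<alpha> x + \<beta> x) \<noteq> (\<lambda>_. 0) \<longrightarrow>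
        (\<forall>x\<in>rootspace n sc br hh \<alpha>. \<forall>y\<in>rootspace n sc br hh \<beta>. brd (xD x) (xD y) = xD (br x y)))
   \<and> (\<forall>\<alpha>. is_root n sc br hh \<alpha> \<longrightarrow>
        (\<forall>x\<in>rootspace n sc br hh \<alpha>. \<forall>y\<in>rootspace n sc br hh (\<lambda>z. - \<alpha> z).
           brd (xD x) (xD y) = (0, sc (1/2) (br x y), sc (1/2) (br x y))))"

end

theory Submission
  imports Defs "Jordan_Normal_Form.Determinant"
begin


lemma cartan_kernel:
  assumes cartan: "gcm_finite_type_sym n C d"
    and h: "\<forall>i<n. (\<Sum>j<n. c j * complex_of_int (C j i)) = 0"
  shows "\<forall>j<n. c j = 0"
proof -
  have dpos: "\<forall>i<n. d i > 0" and sym: "\<forall>i<n. \<forall>j<n. int (d i) * C i j = int (d j) * C j i"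
    and pd: "\<forall>x::nat \<Rightarrow> real. (\<exists>i<n. x i \<noteq> 0) \<longrightarrow>
          (\<Sum>i<n. \<Sum>j<n. x i * real (d i) * real_of_int (C i j) * x j) > 0"
    using cartan unfolding gcm_finite_type_sym_def by auto
  define z where "z j = c j / of_nat (d j)" for j
  have cz: "c j = z j * of_nat (d j)" if "j < n" for j
    using dpos that by (auto simp: z_def)
  have row: "(\<Sum>j<n. complex_of_int (C i j) * z j) = 0" if i: "i < n" for i
  proof -
    have "0 = (\<Sum>j<n. c j * complex_of_int (C j i))" using h i by auto
    also have "\<dots> = (\<Sum>j<n. z j * complex_of_int (int (d j) * C j i))"
      by (rule sum.cong) (auto simp: cz)
    also have "\<dots> = (\<Sum>j<n. z j * complex_of_int (int (d i) * C i j))"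
      by (rule sum.cong) (use sym i in auto)
    also have "\<dots> = of_nat (d i) * (\<Sum>j<n. complex_of_int (C i j) * z j)"
      by (simp add: sum_distrib_left algebra_simps)
    finally show ?thesis using dpos i by auto
  qed
  have real_zero: "\<forall>j<n. x j = 0" if xr: "\<forall>i<n. (\<Sum>j<n. real_of_int (C i j) * x j) = 0" for x :: "nat \<Rightarrow> real"
  proof (rule ccontr)
    assume "\<not> ?thesis"
    then have "(\<Sum>i<n. \<Sum>j<n. x i * real (d i) * real_of_int (C i j) * x j) > 0" using pd by auto
    moreover have "(\<Sum>i<n. \<Sum>j<n. x i * real (d i) * real_of_int (C i j) * x j)
        = (\<Sum>i<n. x i * real (d i) * (\<Sum>j<n. real_of_int (C i j) * x j))"
      by (simp add: sum_distrib_left algebra_simps)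
    ultimately show False using xr by simp
  qed
  have "\<forall>j<n. Re (z j) = 0"
  proof (rule real_zero, intro allI impI)
    fix i assume "i < n"
    have "Re (\<Sum>j<n. complex_of_int (C i j) * z j) = 0" using row[OF \<open>i<n\<close>] by simp
    then show "(\<Sum>j<n. real_of_int (C i j) * Re (z j)) = 0" by (simp add: Re_sum)
  qed
  moreover have "\<forall>j<n. Im (z j) = 0"
  proof (rule real_zero, intro allI impI)
    fix i assume "i < n"
    have "Im (\<Sum>j<n. complex_of_int (C i j) * z j) = 0" using row[OF \<open>i<n\<close>] by simp
    then show "(\<Sum>j<n. real_of_int (C i j) * Im (z j)) = 0" by (simp add: Im_sum)
  qed
  ultimately show ?thesis using cz by (auto simp: complex_eq_iff)
qed

lemma cartan_solve:
  assumes cartan: "gcm_finite_type_sym n C d"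
  shows "\<exists>c. \<forall>i<n. (\<Sum>j<n. c j * complex_of_int (C j i)) = b i"
proof -
  define A :: "complex mat" where "A = mat n n (\<lambda>(i,j). complex_of_int (C j i))"
  have A: "A \<in> carrier_mat n n" by (simp add: A_def)
  have Av: "(A *\<^sub>v v) $ i = (\<Sum>j<n. v $ j * complex_of_int (C j i))" if "v \<in> carrier_vec n" "i < n" for v i
    using that by (auto simp: A_def scalar_prod_def row_def mult.commute lessThan_atLeast0 intro!: sum.cong)
  have "det A \<noteq> 0"
  proof
    assume "det A = 0"
    then obtain v where v: "v \<in> carrier_vec n" "v \<noteq> 0\<^sub>v n" "A *\<^sub>v v = 0\<^sub>v n"
      using det_0_iff_vec_prod_zero_field[OF A] by auto
    have "\<forall>i<n. (\<Sum>j<n. v $ j * complex_of_int (C j i)) = 0"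
    proof (intro allI impI)
      fix i assume "i < n"
      have "(A *\<^sub>v v) $ i = 0" using v(3) \<open>i<n\<close> by simp
      then show "(\<Sum>j<n. v $ j * complex_of_int (C j i)) = 0" using Av[OF v(1) \<open>i<n\<close>] by simp
    qed
    from cartan_kernel[OF cartan this] have "v = 0\<^sub>v n" using v(1) by (intro eq_vecI) auto
    with v(2) show False by simp
  qed
  from det_non_zero_imp_unit[OF A this, of "()"]
  obtain B where B: "B \<in> carrier_mat n n" "A * B = 1\<^sub>m n"
    unfolding Units_def ring_mat_def by auto
  define c where "c = B *\<^sub>v vec n b"
  have c: "c \<in> carrier_vec n" using B by (simp add: c_def)
  have "A *\<^sub>v c = vec n b"
    unfolding c_def using A B by (simp add: assoc_mult_mat_vec[symmetric, of _ n n _ n])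
  then show ?thesis using Av[OF c] by (intro exI[of _ "\<lambda>j. c $ j"]) auto
qed




lemma bilin_span_closed:
  assumes vs1: "vector_space s1" and vs2: "vector_space s2"
    and V: "module.subspace s1 V" and AV: "A \<subseteq> V" and BV: "B \<subseteq> V"
    and S: "module.subspace s2 S"
    and addl: "\<And>x y z. x \<in> V \<Longrightarrow> y \<in> V \<Longrightarrow> z \<in> V \<Longrightarrow> f (x + y) z = f x z + f y z"
    and addr: "\<And>x y z. x \<in> V \<Longrightarrow> y \<in> V \<Longrightarrow> z \<in> V \<Longrightarrow> f x (y + z) = f x y + f x z"
    and scl: "\<And>c x y. x \<in> V \<Longrightarrow> y \<in> V \<Longrightarrow> f (s1 c x) y = s2 c (f x y)"
    and scr: "\<And>c x y. x \<in> V \<Longrightarrow> y \<in> V \<Longrightarrow> f x (s1 c y) = s2 c (f x y)"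
    and gen: "\<And>a b. a \<in> A \<Longrightarrow> b \<in> B \<Longrightarrow> f a b \<in> S"
    and x: "x \<in> module.span s1 A" and y: "y \<in> module.span s1 B"
  shows "f x y \<in> S"
proof -
  interpret v1: vector_space s1 by fact
  interpret v2: vector_space s2 by fact
  have spA: "v1.span A \<subseteq> V" using V AV by (simp add: v1.span_minimal)
  have spB: "v1.span B \<subseteq> V" using V BV by (simp add: v1.span_minimal)
  have z0: "0 \<in> V" using V v1.subspace_0 by auto
  have f0l: "f 0 z = 0" if "z \<in> V" for z
    using addl[OF z0 z0 that] by simp
  have f0r: "f z 0 = 0" if "z \<in> V" for z
    using addr[OF that z0 z0] by simp
  have step1: "f x' b \<in> S" if b: "b \<in> B" and x': "x' \<in> v1.span A" for b x'
  proof -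
    have bV: "b \<in> V" using BV b by auto
    have "v1.subspace {x\<in>V. f x b \<in> S}"
    proof (rule v1.subspaceI)
      show "0 \<in> {x \<in> V. f x b \<in> S}" using z0 f0l[OF bV] S v2.subspace_0 by auto
      show "y + z \<in> {x \<in> V. f x b \<in> S}" if "y \<in> {x \<in> V. f x b \<in> S}" "z \<in> {x \<in> V. f x b \<in> S}" for y z
        using that addl bV V S v1.subspace_add v2.subspace_add by auto
      show "s1 c y \<in> {x \<in> V. f x b \<in> S}" if "y \<in> {x \<in> V. f x b \<in> S}" for c y
        using that scl bV V S v1.subspace_scale v2.subspace_scale by auto
    qed
    moreover have "A \<subseteq> {x\<in>V. f x b \<in> S}" using AV gen b by auto
    ultimately have "v1.span A \<subseteq> {x\<in>V. f x b \<in> S}" by (simp add: v1.span_minimal)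
    then show ?thesis using x' by auto
  qed
  have xV: "x \<in> V" using spA x by auto
  have "v1.subspace {y\<in>V. f x y \<in> S}"
  proof (rule v1.subspaceI)
    show "0 \<in> {y \<in> V. f x y \<in> S}" using z0 f0r[OF xV] S v2.subspace_0 by auto
    show "y + z \<in> {y \<in> V. f x y \<in> S}" if "y \<in> {y \<in> V. f x y \<in> S}" "z \<in> {y \<in> V. f x y \<in> S}" for y z
      using that addr[OF xV] V S v1.subspace_add v2.subspace_add by auto
    show "s1 c y \<in> {y \<in> V. f x y \<in> S}" if "y \<in> {y \<in> V. f x y \<in> S}" for c y
      using that scr[OF xV] V S v1.subspace_scale v2.subspace_scale by auto
  qed
  moreover have "B \<subseteq> {y\<in>V. f x y \<in> S}" using BV step1 x by auto
  ultimately have "v1.span B \<subseteq> {y\<in>V. f x y \<in> S}" by (simp add: v1.span_minimal)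
  then show ?thesis using y by auto
qed

lemma vs_dscale: assumes "vector_space sc" shows "vector_space (dscale sc)"
proof -
  interpret vector_space sc by fact
  show ?thesis unfolding vector_space_def dscale_def
    by (auto simp: scale_right_distrib scale_left_distrib)
qed

locale cs = vs: vector_space sc
  for sc :: "complex \<Rightarrow> 'g::ab_group_add \<Rightarrow> 'g" +
  fixes n :: nat and C :: "nat \<Rightarrow> nat \<Rightarrow> int" and d :: "nat \<Rightarrow> nat" and u :: "nat \<Rightarrow> nat \<Rightarrow> complex"
    and br :: "'g \<Rightarrow> 'g \<Rightarrow> 'g" and hh xp xm :: "nat \<Rightarrow> 'g"
    and brd :: "'g \<times> 'g \<times> 'g \<Rightarrow> 'g \<times> 'g \<times> 'g \<Rightarrow> 'g \<times> 'g \<times> 'g"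
  assumes cartan: "gcm_finite_type_sym n C d"
    and simple: "simple_lie sc br"
    and gens: "chevalley_serre n C sc br hh xp xm"
    and brd_ax: "d_bracket n C d u sc br hh brd"
begin

sublocale dv: vector_space "dscale sc" by (rule vs_dscale) unfold_locales

lemma lin_span_eq: "lin_span sc S = vs.span S"
  unfolding lin_span_def vs.span_def hull_def vs.subspace_def by (rule arg_cong[where f=Inter]) auto

lemma dlin_span_eq: "lin_span (dscale sc) S = dv.span S"
  unfolding lin_span_def dv.span_def hull_def dv.subspace_def by (rule arg_cong[where f=Inter]) auto

lemma is_subspace_eq: "is_subspace sc S = vs.subspace S"
  unfolding is_subspace_def vs.subspace_def by auto

lemma dis_subspace_eq: "is_subspace (dscale sc) S = dv.subspace S"
  unfolding is_subspace_def dv.subspace_def by auto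

lemma br_nontriv: "\<exists>x y. br x y \<noteq> 0"
  using simple[unfolded simple_lie_def, THEN conjunct2, THEN conjunct1] .

lemma lie_g: "lie_algebra UNIV sc br" using simple by (simp add: simple_lie_def)

lemma br_addl: "br (x + y) z = br x z + br y z" using lie_g unfolding lie_algebra_def by blast
lemma br_addr: "br x (y + z) = br x y + br x z" using lie_g unfolding lie_algebra_def by blast
lemma br_scl: "br (sc c x) y = sc c (br x y)" using lie_g unfolding lie_algebra_def by blast
lemma br_scr: "br x (sc c y) = sc c (br x y)" using lie_g unfolding lie_algebra_def by blast
lemma br_alt: "br x x = 0" using lie_g unfolding lie_algebra_def by blast
lemma br_jac: "br x (br y z) + br y (br z x) + br z (br x y) = 0" using lie_g unfolding lie_algebra_def by blast

lemma lin_brl: "Vector_Spaces.linear sc sc (\<lambda>x. br x y)"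
  unfolding Vector_Spaces.linear_iff using br_addl br_scl vs.vector_space_axioms by auto
lemma lin_brr: "Vector_Spaces.linear sc sc (br x)"
  unfolding Vector_Spaces.linear_iff using br_addr br_scr vs.vector_space_axioms by auto

lemma mh_brl: "module_hom sc sc (\<lambda>x. br x y)" using lin_brl module_hom_iff_linear by blast
lemma mh_brr: "module_hom sc sc (br x)" using lin_brr module_hom_iff_linear by blast

lemma br_0l[simp]: "br 0 y = 0" using module_hom.zero[OF mh_brl] by simp
lemma br_0r[simp]: "br x 0 = 0" using module_hom.zero[OF mh_brr] by simp
lemma br_neg_l: "br (- x) y = - br x y" using module_hom.neg[OF mh_brl] by simp
lemma br_neg_r: "br x (- y) = - br x y" using module_hom.neg[OF mh_brr] by simp
lemma br_diff_l: "br (x - y) z = br x z - br y z" using module_hom.diff[OF mh_brl] by simp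
lemma br_diff_r: "br x (y - z) = br x y - br x z" using module_hom.diff[OF mh_brr] by simp
lemma br_sum_l: "br (sum f A) y = (\<Sum>a\<in>A. br (f a) y)" using module_hom.sum[OF mh_brl] by simp
lemma br_sum_r: "br x (sum f A) = (\<Sum>a\<in>A. br x (f a))" using module_hom.sum[OF mh_brr] by simp

lemma br_anti: "br x y = - br y x"
proof -
  have "0 = br (x + y) (x + y)" by (simp add: br_alt)
  also have "\<dots> = (br x x + br y x) + (br x y + br y y)" by (simp only: br_addl br_addr)
  finally have "br x y + br y x = 0" by (simp add: br_alt add.commute)
  then show ?thesis by (metis add.commute neg_eq_iff_add_eq_0)
qed


abbreviation "HS \<equiv> hset n sc hh"
abbreviation "HD \<equiv> hdual n sc hh"
abbreviation "rs \<equiv> rootspace n sc br hh"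
abbreviation "isr \<equiv> is_root n sc br hh"
abbreviation "sr \<equiv> simple_root n C sc hh"
abbreviation "hv \<equiv> hvec n C d sc hh"

lemmas gens_u = gens[unfolded chevalley_serre_def]
lemmas cartan_u = cartan[unfolded gcm_finite_type_sym_def]

lemma gen_all: "lie_generated sc br ({hh i | i. i < n} \<union> {xp i | i. i < n} \<union> {xm i | i. i < n}) = UNIV"
  using gens_u by (rule conjunct1)
lemma hh_hh: "i < n \<Longrightarrow> j < n \<Longrightarrow> br (hh i) (hh j) = 0"
  using gens_u[THEN conjunct2, THEN conjunct1] by blast
lemma hh_xp: "i < n \<Longrightarrow> j < n \<Longrightarrow> br (hh i) (xp j) = sc (of_int (C i j)) (xp j)"
  using gens_u[THEN conjunct2, THEN conjunct2, THEN conjunct1] by blast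
lemma hh_xm: "i < n \<Longrightarrow> j < n \<Longrightarrow> br (hh i) (xm j) = sc (- of_int (C i j)) (xm j)"
  using gens_u[THEN conjunct2, THEN conjunct2, THEN conjunct2, THEN conjunct1] by blast
lemma xp_xm: "i < n \<Longrightarrow> j < n \<Longrightarrow> br (xp i) (xm j) = (if i = j then hh i else 0)"
  using gens_u[THEN conjunct2, THEN conjunct2, THEN conjunct2, THEN conjunct2, THEN conjunct1] by blast

lemma n_pos: "n \<ge> 1" using cartan_u by (rule conjunct1)
lemma Cii: "i < n \<Longrightarrow> C i i = 2" using cartan_u[THEN conjunct2, THEN conjunct1] by blast
lemma indec: "I \<subseteq> {..<n} \<Longrightarrow> I \<noteq> {} \<Longrightarrow> I \<noteq> {..<n} \<Longrightarrow> (\<exists>i\<in>I. \<exists>j\<in>{..<n} - I. C i j \<noteq> 0)"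
  using cartan_u[THEN conjunct2, THEN conjunct2, THEN conjunct2, THEN conjunct2, THEN conjunct1] by blast
lemma dpos: "i < n \<Longrightarrow> d i > 0"
  using cartan_u[THEN conjunct2, THEN conjunct2, THEN conjunct2, THEN conjunct2, THEN conjunct2, THEN conjunct1] by blast
lemma Csym: "i < n \<Longrightarrow> j < n \<Longrightarrow> int (d i) * C i j = int (d j) * C j i"
  using cartan_u[THEN conjunct2, THEN conjunct2, THEN conjunct2, THEN conjunct2, THEN conjunct2, THEN conjunct2, THEN conjunct1] by blast

lemma HS_span: "HS = vs.span {hh i | i. i < n}"
  unfolding hset_def lin_span_eq ..

lemma HS_sub: "vs.subspace HS" unfolding HS_span by simp

lemma hh_HS: "i < n \<Longrightarrow> hh i \<in> HS" unfolding HS_span by (rule vs.span_base) auto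

lemma HS_eq: "HS = {\<Sum>j<n. sc (c j) (hh j) | c. True}"
proof
  show "HS \<subseteq> {\<Sum>j<n. sc (c j) (hh j) | c. True}"
    unfolding HS_span
  proof (rule vs.span_minimal)
    show "{hh i |i. i < n} \<subseteq> {\<Sum>j<n. sc (c j) (hh j) |c. True}"
    proof
      fix x assume "x \<in> {hh i |i. i < n}"
      then obtain i where i: "i < n" "x = hh i" by auto
      have "(\<Sum>j<n. sc (if j = i then 1 else 0) (hh j)) = (\<Sum>j<n. if j = i then hh j else 0)"
        by (rule sum.cong) auto
      also have "\<dots> = x" using i by simp
      finally have "x = (\<Sum>j<n. sc (if j = i then 1 else 0) (hh j))" by simp
      then show "x \<in> {\<Sum>j<n. sc (c j) (hh j) |c. True}"
        unfolding mem_Collect_eq by (intro exI[where x="\<lambda>j. if j = i then 1 else 0"]) simp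
    qed
    show "vs.subspace {\<Sum>j<n. sc (c j) (hh j) |c. True}"
    proof (rule vs.subspaceI)
      show "0 \<in> {\<Sum>j<n. sc (c j) (hh j) |c. True}"
        by (rule CollectI, rule exI[of _ "\<lambda>_. 0"]) simp
      show "x + y \<in> {\<Sum>j<n. sc (c j) (hh j) |c. True}"
        if "x \<in> {\<Sum>j<n. sc (c j) (hh j) |c. True}" "y \<in> {\<Sum>j<n. sc (c j) (hh j) |c. True}" for x y
      proof -
        from that(1) obtain a where a: "x = (\<Sum>j<n. sc (a j) (hh j))" by blast
        from that(2) obtain b where b: "y = (\<Sum>j<n. sc (b j) (hh j))" by blast
        from a b have "x + y = (\<Sum>j<n. sc (a j + b j) (hh j))"
          by (simp add: sum.distrib vs.scale_left_distrib)
        then show ?thesis unfolding mem_Collect_eq by (intro exI[where x="\<lambda>j. a j + b j"]) simp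
      qed
      show "sc c x \<in> {\<Sum>j<n. sc (c j) (hh j) |c. True}"
        if "x \<in> {\<Sum>j<n. sc (c j) (hh j) |c. True}" for c x
      proof -
        from that obtain a where "x = (\<Sum>j<n. sc (a j) (hh j))" by blast
        then have "sc c x = (\<Sum>j<n. sc (c * a j) (hh j))"
          by (simp add: vs.scale_sum_right)
        then show ?thesis unfolding mem_Collect_eq by (intro exI[where x="\<lambda>j. c * a j"]) simp
      qed
    qed
  qed
  show "{\<Sum>j<n. sc (c j) (hh j) | c. True} \<subseteq> HS"
    using hh_HS HS_sub by (auto intro!: vs.subspace_sum vs.subspace_scale)
qed

lemma HS_abel: assumes "H \<in> HS" "H' \<in> HS" shows "br H H' = 0"
proof -
  have "br H H' \<in> {0}"
  proof (rule bilin_span_closed[OF vs.vector_space_axioms vs.vector_space_axioms vs.subspace_UNIV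
      subset_UNIV subset_UNIV vs.subspace_single_0, where f=br and A="{hh i | i. i < n}" and B="{hh i | i. i < n}"])
    show "br a b \<in> {0}" if "a \<in> {hh i | i. i < n}" "b \<in> {hh i | i. i < n}" for a b
      using that hh_hh by auto
  qed (use assms in \<open>auto simp: br_addl br_addr br_scl br_scr HS_span\<close>)
  then show ?thesis by simp
qed


lemma xp_nz: assumes i: "i < n" shows "xp i \<noteq> 0"
proof
  assume xi: "xp i = 0"
  define I where "I = {j. j < n \<and> xp j = 0}"
  have hz: "hh j = 0" if "j \<in> I" for j
  proof -
    have j: "j < n" "xp j = 0" using that by (auto simp: I_def)
    have "hh j = br (xp j) (xm j)" using xp_xm[OF j(1) j(1)] by simp
    then show ?thesis using j by simp
  qed
  have clos: "k \<in> I" if "j \<in> I" "k < n" "C j k \<noteq> 0" for j k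
  proof -
    have j: "j < n" using that by (auto simp: I_def)
    have "sc (of_int (C j k)) (xp k) = br (hh j) (xp k)" using hh_xp[OF j that(2)] by simp
    also have "\<dots> = 0" using hz[OF that(1)] by simp
    finally have "xp k = 0" using that(3) by simp
    then show ?thesis using that(2) by (simp add: I_def)
  qed
  have "I = {..<n}"
  proof (rule ccontr)
    assume "I \<noteq> {..<n}"
    moreover have "I \<subseteq> {..<n}" by (auto simp: I_def)
    moreover have "I \<noteq> {}" using i xi by (auto simp: I_def)
    ultimately have "\<exists>j\<in>I. \<exists>k\<in>{..<n} - I. C j k \<noteq> 0" using indec[of I] by blast
    then obtain j k where jk: "j \<in> I" "k \<in> {..<n} - I" "C j k \<noteq> 0" by blast
    then have "k \<in> I" using clos[of j k] by blast
    then show False using jk by blast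
  qed
  then have allx: "j < n \<Longrightarrow> xp j = 0" and allh: "j < n \<Longrightarrow> hh j = 0" for j
    using hz by (auto simp: I_def)
  have ally: "xm j = 0" if "j < n" for j
  proof -
    have "sc (- of_int (C j j)) (xm j) = br (hh j) (xm j)" using hh_xm[of j j] that by auto
    also have "\<dots> = 0" using allh[OF that] by simp
    finally show ?thesis using Cii[OF that] by simp
  qed
  have "({hh i | i. i < n} \<union> {xp i | i. i < n} \<union> {xm i | i. i < n}) \<subseteq> {0}"
    using allx allh ally by auto
  moreover have "is_subspace sc {0}" by (simp add: is_subspace_eq)
  ultimately have "lie_generated sc br ({hh i | i. i < n} \<union> {xp i | i. i < n} \<union> {xm i | i. i < n}) \<subseteq> {0}"
    unfolding lie_generated_def by (intro Inter_lower) auto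
  then have "UNIV \<subseteq> {0::'g}" using gen_all by simp
  then have "br x y = 0" for x y by blast
  then show False using br_nontriv by blast
qed

lemma br_hsum_xp: "i < n \<Longrightarrow> br (\<Sum>j<n. sc (c j) (hh j)) (xp i) = sc (\<Sum>j<n. c j * of_int (C j i)) (xp i)"
  by (simp add: br_sum_l br_scl hh_xp vs.scale_sum_left)

lemma br_hsum_xm: "i < n \<Longrightarrow> br (\<Sum>j<n. sc (c j) (hh j)) (xm i) = sc (- (\<Sum>j<n. c j * of_int (C j i))) (xm i)"
  by (simp add: br_sum_l br_scl hh_xm vs.scale_sum_left flip: sum_negf)

lemma hh_indep: assumes "(\<Sum>j<n. sc (c j) (hh j)) = 0" shows "\<forall>j<n. c j = 0"
proof (rule cartan_kernel[OF cartan], intro allI impI)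
  fix i assume i: "i < n"
  have "sc (\<Sum>j<n. c j * of_int (C j i)) (xp i) = 0"
    using br_hsum_xp[OF i, of c] assms by simp
  then show "(\<Sum>j<n. c j * complex_of_int (C j i)) = 0" using xp_nz[OF i] by simp
qed

lemma hh_coeff_unique: assumes "(\<Sum>j<n. sc (a j) (hh j)) = (\<Sum>j<n. sc (b j) (hh j))"
  shows "\<forall>j<n. a j = b j"
proof -
  have "(\<Sum>j<n. sc (a j - b j) (hh j)) = 0"
    using assms by (simp add: vs.scale_left_diff_distrib sum_subtractf)
  from hh_indep[OF this] show ?thesis by simp
qed

definition coord :: "'g \<Rightarrow> nat \<Rightarrow> complex" where
  "coord x = (SOME c. x = (\<Sum>j<n. sc (c j) (hh j)))"

lemma coord_eq: assumes "x \<in> HS" shows "x = (\<Sum>j<n. sc (coord x j) (hh j))"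
proof -
  from assms have "\<exists>c. x = (\<Sum>j<n. sc (c j) (hh j))" unfolding HS_eq by auto
  then show ?thesis unfolding coord_def by (rule someI_ex)
qed

lemma coord_sum: "j < n \<Longrightarrow> coord (\<Sum>j<n. sc (c j) (hh j)) j = c j"
proof -
  assume j: "j < n"
  have "(\<Sum>j<n. sc (c j) (hh j)) \<in> HS" unfolding HS_eq by blast
  from hh_coeff_unique[OF coord_eq[OF this, symmetric]] show ?thesis using j by blast
qed

definition fv :: "(nat \<Rightarrow> complex) \<Rightarrow> 'g \<Rightarrow> complex" where
  "fv v x = (if x \<in> HS then (\<Sum>j<n. coord x j * v j) else 0)"

lemma fv_sum: "fv v (\<Sum>j<n. sc (c j) (hh j)) = (\<Sum>j<n. c j * v j)"
proof -
  have "(\<Sum>j<n. sc (c j) (hh j)) \<in> HS" unfolding HS_eq by blast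
  then show ?thesis unfolding fv_def by (simp add: coord_sum)
qed

lemma HS_elim: assumes "x \<in> HS" obtains c where "x = (\<Sum>j<n. sc (c j) (hh j))"
  using assms unfolding HS_eq by blast

lemma fv_hdual: "fv v \<in> HD"
proof -
  have "fv v (x + y) = fv v x + fv v y" if xy: "x \<in> HS" "y \<in> HS" for x y
  proof -
    obtain a where a: "x = (\<Sum>j<n. sc (a j) (hh j))" using HS_elim[OF xy(1)] by blast
    obtain b where b: "y = (\<Sum>j<n. sc (b j) (hh j))" using HS_elim[OF xy(2)] by blast
    have xy: "x + y = (\<Sum>j<n. sc (a j + b j) (hh j))" using a b by (simp add: sum.distrib vs.scale_left_distrib)
    have "fv v (x + y) = (\<Sum>j<n. (a j + b j) * v j)" unfolding xy fv_sum ..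
    also have "\<dots> = fv v x + fv v y" unfolding a b fv_sum by (simp add: sum.distrib algebra_simps)
    finally show ?thesis .
  qed
  moreover have "fv v (sc c x) = c * fv v x" if xh: "x \<in> HS" for c x
  proof -
    obtain a where a: "x = (\<Sum>j<n. sc (a j) (hh j))" using HS_elim[OF xh] by blast
    have cx: "sc c x = (\<Sum>j<n. sc (c * a j) (hh j))" using a by (simp add: vs.scale_sum_right)
    have "fv v (sc c x) = (\<Sum>j<n. (c * a j) * v j)" unfolding cx fv_sum ..
    also have "\<dots> = c * fv v x" unfolding a fv_sum by (simp add: sum_distrib_left algebra_simps)
    finally show ?thesis .
  qed
  moreover have "fv v x = 0" if "x \<notin> HS" for x using that by (simp add: fv_def)
  ultimately show ?thesis unfolding hdual_def by blast
qed

lemma hh_as_sum: "i < n \<Longrightarrow> hh i = (\<Sum>j<n. sc (if j = i then 1 else 0) (hh j))"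
proof -
  assume i: "i < n"
  have "(\<Sum>j<n. sc (if j = i then 1 else 0) (hh j)) = (\<Sum>j<n. if j = i then hh j else 0)"
    by (rule sum.cong) auto
  also have "\<dots> = hh i" using i by simp
  finally show ?thesis by simp
qed

lemma fv_hh: assumes i: "i < n" shows "fv v (hh i) = v i"
proof -
  have "fv v (hh i) = (\<Sum>j<n. (if j = i then 1 else 0) * v j)"
    by (subst hh_as_sum[OF i], subst fv_sum) simp
  also have "\<dots> = (\<Sum>j<n. if j = i then v j else 0)" by (rule sum.cong) auto
  also have "\<dots> = v i" using i by simp
  finally show ?thesis .
qed

lemma hdual_add: "lam \<in> HD \<Longrightarrow> x \<in> HS \<Longrightarrow> y \<in> HS \<Longrightarrow> lam (x + y) = lam x + lam y"
  unfolding hdual_def by blast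
lemma hdual_scale: "lam \<in> HD \<Longrightarrow> x \<in> HS \<Longrightarrow> lam (sc c x) = c * lam x"
  unfolding hdual_def by blast
lemma hdual_out: "lam \<in> HD \<Longrightarrow> x \<notin> HS \<Longrightarrow> lam x = 0"
  unfolding hdual_def by blast

lemma hdual_sum_gen: assumes lam: "lam \<in> HD" shows "finite A \<Longrightarrow> (\<forall>j\<in>A. f j \<in> HS) \<Longrightarrow> lam (sum f A) = (\<Sum>j\<in>A. lam (f j))"
proof (induction A rule: finite_induct)
  case empty
  have "lam 0 = lam (0 + 0)" by simp
  also have "\<dots> = lam 0 + lam 0" using hdual_add[OF lam] HS_sub vs.subspace_0 by blast
  finally show ?case by simp
next
  case (insert a A)
  have "sum f A \<in> HS" using insert HS_sub by (auto intro: vs.subspace_sum)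
  then show ?case using insert hdual_add[OF lam, of "f a" "sum f A"] by auto
qed

lemma hdual_sum: "lam \<in> HD \<Longrightarrow> lam (\<Sum>j<n. sc (c j) (hh j)) = (\<Sum>j<n. c j * lam (hh j))"
  by (subst hdual_sum_gen) (auto intro!: sum.cong hdual_scale hh_HS vs.subspace_scale[OF HS_sub])

lemma hdual_ext: assumes "lam \<in> HD" "mu \<in> HD" "\<forall>i<n. lam (hh i) = mu (hh i)" shows "lam = mu"
proof
  fix x show "lam x = mu x"
  proof (cases "x \<in> HS")
    case True
    then obtain c where "x = (\<Sum>j<n. sc (c j) (hh j))" by (rule HS_elim)
    then show ?thesis using assms by (simp add: hdual_sum)
  next
    case False then show ?thesis using assms hdual_out by metis
  qed
qed

lemma zero_hdual: "(\<lambda>_. 0) \<in> HD" unfolding hdual_def by simp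

lemma hdual_neg: "lam \<in> HD \<Longrightarrow> (\<lambda>x. - lam x) \<in> HD" unfolding hdual_def by auto
lemma hdual_plus: "lam \<in> HD \<Longrightarrow> mu \<in> HD \<Longrightarrow> (\<lambda>x. lam x + mu x) \<in> HD"
  unfolding hdual_def by (auto simp: algebra_simps)
lemma hdual_smult: "lam \<in> HD \<Longrightarrow> (\<lambda>x. c * lam x) \<in> HD" unfolding hdual_def by (auto simp: algebra_simps)

lemma sr_eq: "sr i = fv (\<lambda>j. of_int (C j i))"
  unfolding simple_root_def
proof (rule the_equality)
  show "fv (\<lambda>j. of_int (C j i)) \<in> HD \<and> (\<forall>j<n. fv (\<lambda>j. of_int (C j i)) (hh j) = of_int (C j i))"
    by (simp add: fv_hdual fv_hh)
  show "lam = fv (\<lambda>j. complex_of_int (C j i))" if "lam \<in> HD \<and> (\<forall>j<n. lam (hh j) = complex_of_int (C j i))" for lam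
    using that by (intro hdual_ext) (auto simp: fv_hdual fv_hh)
qed

lemma sr_hdual: "sr i \<in> HD" by (simp add: sr_eq fv_hdual)
lemma sr_hh: "j < n \<Longrightarrow> sr i (hh j) = of_int (C j i)" by (simp add: sr_eq fv_hh)
lemma sr_sum: "sr i (\<Sum>j<n. sc (c j) (hh j)) = (\<Sum>j<n. c j * of_int (C j i))" by (simp add: sr_eq fv_sum)


lemma sr_inj: assumes "H \<in> HS" "H' \<in> HS" "\<forall>i<n. sr i H = sr i H'" shows "H = H'"
proof -
  obtain a where a: "H = (\<Sum>j<n. sc (a j) (hh j))" using HS_elim[OF assms(1)] by blast
  obtain b where b: "H' = (\<Sum>j<n. sc (b j) (hh j))" using HS_elim[OF assms(2)] by blast
  have "\<forall>i<n. (\<Sum>j<n. (a j - b j) * complex_of_int (C j i)) = 0"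
  proof (intro allI impI)
    fix i assume "i < n"
    then have e: "(\<Sum>j<n. a j * complex_of_int (C j i)) = (\<Sum>j<n. b j * complex_of_int (C j i))"
      using assms(3) unfolding a b sr_sum by blast
    have "(\<Sum>j<n. (a j - b j) * complex_of_int (C j i))
       = (\<Sum>j<n. a j * complex_of_int (C j i)) - (\<Sum>j<n. b j * complex_of_int (C j i))"
      by (simp only: left_diff_distrib sum_subtractf)
    then show "(\<Sum>j<n. (a j - b j) * complex_of_int (C j i)) = 0" using e by simp
  qed
  from cartan_kernel[OF cartan this] have "\<forall>j<n. a j = b j" by simp
  then show ?thesis unfolding a b by (intro sum.cong) auto
qed

lemma hv_ex: assumes lam: "lam \<in> HD" shows "\<exists>H. H \<in> HS \<and> (\<forall>i<n. sr i H = of_nat (d i) * lam (hh i))"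
proof -
  obtain c where c: "\<forall>i<n. (\<Sum>j<n. c j * complex_of_int (C j i)) = of_nat (d i) * lam (hh i)"
    using cartan_solve[OF cartan, of "\<lambda>i. of_nat (d i) * lam (hh i)"] by blast
  have "(\<Sum>j<n. sc (c j) (hh j)) \<in> HS" unfolding HS_eq by blast
  then show ?thesis using c by (intro exI[of _ "\<Sum>j<n. sc (c j) (hh j)"]) (simp add: sr_sum)
qed

lemma hv_prop: assumes lam: "lam \<in> HD"
  shows "hv lam \<in> HS \<and> (\<forall>i<n. sr i (hv lam) = of_nat (d i) * lam (hh i))"
proof -
  have "\<exists>!H. H \<in> HS \<and> (\<forall>i<n. sr i H = of_nat (d i) * lam (hh i))"
  proof (rule ex_ex1I)
    show "\<exists>H. H \<in> HS \<and> (\<forall>i<n. sr i H = of_nat (d i) * lam (hh i))" by (rule hv_ex[OF lam])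
    show "H = H'" if "H \<in> HS \<and> (\<forall>i<n. sr i H = of_nat (d i) * lam (hh i))"
      "H' \<in> HS \<and> (\<forall>i<n. sr i H' = of_nat (d i) * lam (hh i))" for H H'
      using that by (intro sr_inj) auto
  qed
  then show ?thesis unfolding hvec_def by (rule theI')
qed

lemma hv_HS: "lam \<in> HD \<Longrightarrow> hv lam \<in> HS" using hv_prop by blast
lemma hv_sr: "lam \<in> HD \<Longrightarrow> i < n \<Longrightarrow> sr i (hv lam) = of_nat (d i) * lam (hh i)" using hv_prop by blast

lemma hv_eqI: assumes "lam \<in> HD" "H \<in> HS" "\<forall>i<n. sr i H = of_nat (d i) * lam (hh i)" shows "hv lam = H"
  using sr_inj[OF hv_HS[OF assms(1)] assms(2)] hv_sr[OF assms(1)] assms(3) by simp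

lemma hv_surj: assumes H: "H \<in> HS" shows "\<exists>lam\<in>HD. hv lam = H"
proof -
  define lam where "lam = fv (\<lambda>i. sr i H / of_nat (d i))"
  have lam: "lam \<in> HD" by (simp add: lam_def fv_hdual)
  have "\<forall>i<n. sr i H = of_nat (d i) * lam (hh i)"
    using dpos by (auto simp: lam_def fv_hh)
  then show ?thesis using hv_eqI[OF lam H] lam by blast
qed

lemma hdual_hh_val: assumes lam: "lam \<in> HD" and j: "j < n" and H: "hv lam = (\<Sum>k<n. sc (e k) (hh k))"
  shows "lam (hh j) = (\<Sum>k<n. e k * of_int (C k j)) / of_nat (d j)"
  using hv_sr[OF lam j] dpos[OF j] unfolding H sr_sum by (simp add: field_simps)

lemma C_div: "j < n \<Longrightarrow> k < n \<Longrightarrow> complex_of_int (C k j) / of_nat (d j) = of_int (C j k) / of_nat (d k)"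
proof -
  assume jk: "j < n" "k < n"
  have "complex_of_int (int (d k) * C k j) = complex_of_int (int (d j) * C j k)" using Csym[OF jk(2) jk(1)] by simp
  then have "of_nat (d k) * complex_of_int (C k j) = of_nat (d j) * of_int (C j k)" by simp
  then show ?thesis using dpos[OF jk(1)] dpos[OF jk(2)] by (simp add: field_simps)
qed

lemma hv_sym: assumes lam: "lam \<in> HD" and mu: "mu \<in> HD" shows "lam (hv mu) = mu (hv lam)"
proof -
  obtain c where c: "hv mu = (\<Sum>j<n. sc (c j) (hh j))" using HS_elim[OF hv_HS[OF mu]] by blast
  obtain e where e: "hv lam = (\<Sum>j<n. sc (e j) (hh j))" using HS_elim[OF hv_HS[OF lam]] by blast
  have "lam (hv mu) = (\<Sum>j<n. c j * ((\<Sum>k<n. e k * of_int (C k j)) / of_nat (d j)))"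
    unfolding c hdual_sum[OF lam] using hdual_hh_val[OF lam _ e] by (intro sum.cong) auto
  also have "\<dots> = (\<Sum>j<n. \<Sum>k<n. c j * e k * (of_int (C k j) / of_nat (d j)))"
    by (simp add: sum_distrib_left sum_divide_distrib mult.assoc)
  also have "\<dots> = (\<Sum>j<n. \<Sum>k<n. c j * e k * (of_int (C j k) / of_nat (d k)))"
    by (intro sum.cong refl) (simp add: C_div)
  also have "\<dots> = (\<Sum>k<n. \<Sum>j<n. e k * c j * (of_int (C j k) / of_nat (d k)))"
    by (subst sum.swap) (simp add: mult.commute)
  also have "\<dots> = (\<Sum>k<n. e k * ((\<Sum>j<n. c j * of_int (C j k)) / of_nat (d k)))"
    by (simp add: sum_distrib_left sum_divide_distrib mult.assoc)
  also have "\<dots> = mu (hv lam)"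
    unfolding e hdual_sum[OF mu] using hdual_hh_val[OF mu _ c] by (intro sum.cong) auto
  finally show ?thesis .
qed

lemma hdual_zero_on_hv: assumes psi: "psi \<in> HD" and z: "\<forall>mu\<in>HD. psi (hv mu) = 0" shows "psi = (\<lambda>_. 0)"
proof (rule hdual_ext[OF psi zero_hdual], intro allI impI)
  fix i assume "i < n"
  then obtain mu where mu: "mu \<in> HD" "hv mu = hh i" using hv_surj[OF hh_HS] by blast
  from z mu(1) have "psi (hv mu) = 0" by blast
  then show "psi (hh i) = 0" using mu(2) by simp
qed

lemma Phi_zero: assumes "\<forall>mu\<in>HD. uform n u hh lam mu = 0"
  shows "Phi n C d u sc hh lam = (\<lambda>_. 0)"
  unfolding Phi_def
proof (rule the_equality)
  show "(\<lambda>_. 0) \<in> HD \<and> (\<forall>mu\<in>HD. hform n C d sc hh (\<lambda>_. 0) mu = uform n u hh lam mu)"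
    using assms zero_hdual by (simp add: hform_def)
  show "psi = (\<lambda>_. 0)" if "psi \<in> HD \<and> (\<forall>mu\<in>HD. hform n C d sc hh psi mu = uform n u hh lam mu)" for psi
    using that assms by (intro hdual_zero_on_hv) (auto simp: hform_def)
qed

lemma Phi_rad: "lam \<in> rad_u n u sc hh \<Longrightarrow> Phi n C d u sc hh lam = (\<lambda>_. 0)"
  unfolding rad_u_def by (rule Phi_zero) blast

lemma Phi_u0: "\<forall>i<n. \<forall>j<n. u i j = 0 \<Longrightarrow> Phi n C d u sc hh lam = (\<lambda>_. 0)"
  by (rule Phi_zero) (simp add: uform_def)


section \<open>Root spaces\<close>

lemma rs_sub: "vs.subspace (rs a)"
proof (rule vs.subspaceI)
  show "0 \<in> rs a" by (simp add: rootspace_def)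
  show "x + y \<in> rs a" if "x \<in> rs a" "y \<in> rs a" for x y
    using that by (simp add: rootspace_def br_addr vs.scale_right_distrib)
  show "sc c x \<in> rs a" if "x \<in> rs a" for c x
    using that by (simp add: rootspace_def br_scr vs.scale_left_commute)
qed

lemma rs_br: assumes H: "H \<in> HS" and x: "x \<in> rs a" shows "br H x = sc (a H) x"
  using assms by (simp add: rootspace_def)

lemma HS_rs0: "HS \<subseteq> rs (\<lambda>_. 0)"
  by (auto simp: rootspace_def HS_abel)

lemma br_rs: assumes x: "x \<in> rs a" and y: "y \<in> rs b" shows "br x y \<in> rs (\<lambda>z. a z + b z)"
  unfolding rootspace_def
proof (intro CollectI ballI)
  fix H assume H: "H \<in> HS"
  have j: "br H (br x y) + br x (br y H) + br y (br H x) = 0" by (rule br_jac)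
  have "br x (br y H) = - sc (b H) (br x y)"
    using rs_br[OF H y] by (simp add: br_anti[of y H] br_neg_r br_scr)
  moreover have "br y (br H x) = - sc (a H) (br x y)"
    using rs_br[OF H x] by (simp add: br_scr br_anti[of y x])
  moreover have "br H (br x y) = - (br x (br y H) + br y (br H x))"
    using j by (subst eq_neg_iff_add_eq_0) (simp add: add.assoc)
  ultimately have "br H (br x y) = sc (b H) (br x y) + sc (a H) (br x y)"
    by simp
  then show "br H (br x y) = sc (a H + b H) (br x y)" by (simp add: vs.scale_left_distrib add.commute)
qed

lemma xp_rs: assumes i: "i < n" shows "xp i \<in> rs (sr i)"
  unfolding rootspace_def
proof (intro CollectI ballI)
  fix H assume "H \<in> HS"
  then obtain c where c: "H = (\<Sum>j<n. sc (c j) (hh j))" by (rule HS_elim)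
  show "br H (xp i) = sc (sr i H) (xp i)" unfolding c br_hsum_xp[OF i] sr_sum ..
qed

lemma xm_rs: assumes i: "i < n" shows "xm i \<in> rs (\<lambda>z. - sr i z)"
  unfolding rootspace_def
proof (intro CollectI ballI)
  fix H assume "H \<in> HS"
  then obtain c where c: "H = (\<Sum>j<n. sc (c j) (hh j))" by (rule HS_elim)
  show "br H (xm i) = sc (- sr i H) (xm i)" unfolding c br_hsum_xm[OF i] sr_sum ..
qed

lemma xm_nz: assumes i: "i < n" shows "xm i \<noteq> 0"
proof
  assume "xm i = 0"
  then have "hh i = 0" using xp_xm[OF i i] by simp
  then have "sc (of_int (C i i)) (xp i) = 0" using hh_xp[OF i i] by simp
  then show False using Cii[OF i] xp_nz[OF i] by simp
qed

lemma sr_nz: "i < n \<Longrightarrow> sr i \<noteq> (\<lambda>_. 0)"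
proof
  assume i: "i < n" and "sr i = (\<lambda>_. 0)"
  then have "sr i (hh i) = 0" by simp
  then show False using sr_hh[OF i, of i] Cii[OF i] by simp
qed

lemma sr_pos: assumes i: "i < n" shows "pos_root n C sc br hh (sr i)"
  unfolding pos_root_def is_root_def
proof (intro conjI)
  show "sr i \<in> HD" by (rule sr_hdual)
  show "sr i \<noteq> (\<lambda>_. 0)" by (rule sr_nz[OF i])
  show "rs (sr i) \<noteq> {0}" using xp_rs[OF i] xp_nz[OF i] by blast
  show "\<exists>c::nat \<Rightarrow> nat. \<forall>H\<in>HS. sr i H = (\<Sum>k<n. of_nat (c k) * sr k H)"
  proof (intro exI[of _ "\<lambda>k. if k = i then 1 else 0"] ballI)
    fix H
    have "(\<Sum>k<n. of_nat (if k = i then 1 else 0) * sr k H) = (\<Sum>k<n. if k = i then sr k H else 0)"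
      by (rule sum.cong) auto
    also have "\<dots> = sr i H" using i by simp
    finally show "sr i H = (\<Sum>k<n. of_nat (if k = i then 1 else 0) * sr k H)" by simp
  qed
qed

lemma sr_neg: assumes i: "i < n" shows "neg_root n C sc br hh (\<lambda>z. - sr i z)"
  unfolding neg_root_def
proof
  show "isr (\<lambda>z. - sr i z)"
    unfolding is_root_def
  proof (intro conjI)
    show "(\<lambda>z. - sr i z) \<in> HD" by (rule hdual_neg[OF sr_hdual])
    show "(\<lambda>z. - sr i z) \<noteq> (\<lambda>_. 0)" using sr_nz[OF i] by (auto simp: fun_eq_iff)
    show "rs (\<lambda>z. - sr i z) \<noteq> {0}" using xm_rs[OF i] xm_nz[OF i] by blast
  qed
  show "pos_root n C sc br hh (\<lambda>x. - (- sr i x))" using sr_pos[OF i] by simp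
qed

definition RR where "RR = {a. pos_root n C sc br hh a \<or> neg_root n C sc br hh a}"
definition RV where "RV = \<Union>{rs a | a. a \<in> RR}"
definition NS where "NS = vs.span RV"

lemma RR_root: "a \<in> RR \<Longrightarrow> isr a"
  unfolding RR_def pos_root_def neg_root_def by blast

lemma root_HD: "isr a \<Longrightarrow> a \<in> HD" unfolding is_root_def by blast
lemma root_nz: "isr a \<Longrightarrow> a \<noteq> (\<lambda>_. 0)" unfolding is_root_def by blast

lemma nset_NS: "nset n C sc br hh = NS"
proof -
  have "RV = \<Union>{rs a | a. neg_root n C sc br hh a} \<union> \<Union>{rs a | a. pos_root n C sc br hh a}"
    unfolding RV_def RR_def by blast
  then have "NS = vs.span (\<Union>{rs a | a. neg_root n C sc br hh a} \<union> \<Union>{rs a | a. pos_root n C sc br hh a})"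
    unfolding NS_def by simp
  then show ?thesis
    unfolding nset_def nminus_def nplus_def lin_span_eq vs.span_Un by simp
qed

lemma NS_sub: "vs.subspace NS" unfolding NS_def by simp

lemma rs_NS: "a \<in> RR \<Longrightarrow> rs a \<subseteq> NS"
  unfolding NS_def RV_def by (auto intro: vs.span_base)

lemma xp_NS: "i < n \<Longrightarrow> xp i \<in> NS" using rs_NS[of "sr i"] xp_rs sr_pos by (auto simp: RR_def)
lemma xm_NS: "i < n \<Longrightarrow> xm i \<in> NS" using rs_NS[of "\<lambda>z. - sr i z"] xm_rs sr_neg by (auto simp: RR_def)

section \<open>Independence of weight spaces\<close>

lemma hdual_neq: assumes "a \<in> HD" "b \<in> HD" "a \<noteq> b" shows "\<exists>H\<in>HS. a H \<noteq> b H"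
proof (rule ccontr)
  assume "\<not> ?thesis"
  then have "a x = b x" for x using assms hdual_out[of a x] hdual_out[of b x] by (cases "x \<in> HS") auto
  then show False using assms(3) by auto
qed

lemma wt_indep:
  "finite F \<Longrightarrow> F \<subseteq> HD \<Longrightarrow> (\<forall>b\<in>F. v b \<in> rs b) \<Longrightarrow> sum v F = 0 \<Longrightarrow> (\<forall>b\<in>F. v b = 0)"
proof (induction F arbitrary: v rule: finite_induct)
  case empty then show ?case by simp
next
  case (insert g F)
  let ?S = "sum v F"
  have sum0: "v g + ?S = 0" using insert by simp
  have vF: "\<forall>b\<in>F. v b \<in> rs b" using insert by simp
  have vg: "v g \<in> rs g" using insert by simp
  have zero_F: "v b = 0" if b: "b \<in> F" for b
  proof -
    have "b \<noteq> g" using insert b by auto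
    moreover have "b \<in> HD" "g \<in> HD" using insert b by auto
    ultimately obtain H where H: "H \<in> HS" "b H \<noteq> g H" using hdual_neq by metis
    define w where "w c = sc (c H - g H) (v c)" for c
    have wrs: "\<forall>c\<in>F. w c \<in> rs c" using vF rs_sub vs.subspace_scale unfolding w_def by blast
    have "br H ?S = (\<Sum>c\<in>F. sc (c H) (v c))"
      unfolding br_sum_r using vF H rs_br by (intro sum.cong) auto
    moreover have "br H ?S = sc (g H) ?S"
    proof -
      have S: "?S = - v g" using sum0 by (simp add: eq_neg_iff_add_eq_0 add.commute)
      show ?thesis unfolding S br_neg_r rs_br[OF H(1) vg] by simp
    qed
    ultimately have "sum w F = 0"
      unfolding w_def by (simp add: vs.scale_left_diff_distrib sum_subtractf vs.scale_sum_right)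
    then have "\<forall>c\<in>F. w c = 0" using insert.IH[of w] wrs insert.prems by auto
    then have "w b = 0" using b by blast
    then show ?thesis using H(2) by (simp add: w_def)
  qed
  then have "?S = 0" by simp
  then have "v g = 0" using sum0 by simp
  then show ?case using zero_F by auto
qed

definition SW where "SW A = {sum v F | F v. finite F \<and> F \<subseteq> A \<and> (\<forall>b\<in>F. v b \<in> rs b)}"

lemma SW_sub: "vs.subspace (SW A)"
proof (rule vs.subspaceI)
  show "0 \<in> SW A" unfolding SW_def by (rule CollectI, intro exI[of _ "{}"]) auto
  show "x + y \<in> SW A" if "x \<in> SW A" "y \<in> SW A" for x y
  proof -
    from that(1) obtain F1 v1 where 1: "x = sum v1 F1" "finite F1" "F1 \<subseteq> A" "\<forall>b\<in>F1. v1 b \<in> rs b"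
      unfolding SW_def by blast
    from that(2) obtain F2 v2 where 2: "y = sum v2 F2" "finite F2" "F2 \<subseteq> A" "\<forall>b\<in>F2. v2 b \<in> rs b"
      unfolding SW_def by blast
    define w where "w b = (if b \<in> F1 then v1 b else 0) + (if b \<in> F2 then v2 b else 0)" for b
    have "sum w (F1 \<union> F2) = sum (\<lambda>b. if b \<in> F1 then v1 b else 0) (F1 \<union> F2) + sum (\<lambda>b. if b \<in> F2 then v2 b else 0) (F1 \<union> F2)"
      unfolding w_def by (rule sum.distrib)
    also have "sum (\<lambda>b. if b \<in> F1 then v1 b else 0) (F1 \<union> F2) = sum v1 F1"
      using 1(2) 2(2) by (simp add: sum.If_cases Int_absorb1)
    also have "sum (\<lambda>b. if b \<in> F2 then v2 b else 0) (F1 \<union> F2) = sum v2 F2"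
      using 1(2) 2(2) by (simp add: sum.If_cases Int_absorb1)
    finally have "x + y = sum w (F1 \<union> F2)" using 1 2 by simp
    moreover have "\<forall>b\<in>F1 \<union> F2. w b \<in> rs b"
      unfolding w_def using 1(4) 2(4) rs_sub vs.subspace_add vs.subspace_0 by (auto simp del: Un_iff)
    ultimately show ?thesis unfolding SW_def using 1(2,3) 2(2,3) by blast
  qed
  show "sc c x \<in> SW A" if "x \<in> SW A" for c x
  proof -
    from that obtain F v where 1: "x = sum v F" "finite F" "F \<subseteq> A" "\<forall>b\<in>F. v b \<in> rs b"
      unfolding SW_def by blast
    have "sc c x = sum (\<lambda>b. sc c (v b)) F" using 1 by (simp add: vs.scale_sum_right)
    moreover have "\<forall>b\<in>F. sc c (v b) \<in> rs b" using 1(4) rs_sub vs.subspace_scale by blast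
    ultimately show ?thesis unfolding SW_def using 1(2,3) by blast
  qed
qed

lemma NS_SW: "NS \<subseteq> SW RR"
  unfolding NS_def
proof (rule vs.span_minimal[OF _ SW_sub])
  show "RV \<subseteq> SW RR"
  proof
    fix x assume "x \<in> RV"
    then obtain a where a: "a \<in> RR" "x \<in> rs a" unfolding RV_def by blast
    have "x = sum (\<lambda>_. x) {a}" by simp
    then show "x \<in> SW RR" unfolding SW_def using a by blast
  qed
qed

lemma RR_HD: "RR \<subseteq> HD" using RR_root root_HD by blast
lemma RR_nz: "(\<lambda>_. 0) \<notin> RR" using RR_root root_nz by blast

lemma NS_HS_zero: assumes y: "y \<in> NS" "y \<in> HS" shows "y = 0"
proof -
  obtain F v where F: "y = sum v F" "finite F" "F \<subseteq> RR" "\<forall>b\<in>F. v b \<in> rs b"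
    using NS_SW y(1) unfolding SW_def by blast
  define z :: "'g \<Rightarrow> complex" where "z = (\<lambda>_. 0)"
  have zF: "z \<notin> F" using F(3) RR_nz by (auto simp: z_def)
  define w where "w b = (if b = z then - y else v b)" for b
  have "sum w (insert z F) = - y + sum v F"
    using zF F(2) by (simp add: w_def) (rule sum.cong, auto)
  then have s0: "sum w (insert z F) = 0" using F(1) by simp
  have "insert z F \<subseteq> HD" using F(3) RR_HD zero_hdual by (auto simp: z_def)
  moreover have "\<forall>b\<in>insert z F. w b \<in> rs b"
    using F(4) zF y(2) HS_rs0 vs.subspace_neg[OF rs_sub] by (auto simp: w_def z_def)
  ultimately have "\<forall>b\<in>insert z F. w b = 0" using wt_indep[OF _ _ _ s0] F(2) by blast
  then show ?thesis by (simp add: w_def)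
qed


abbreviation "DS \<equiv> dset n C sc br hh"
abbreviation hDD :: "('g \<Rightarrow> complex) \<Rightarrow> 'g \<times> 'g \<times> 'g" where "hDD \<equiv> hD n C d sc hh"
abbreviation kDD :: "('g \<Rightarrow> complex) \<Rightarrow> 'g \<times> 'g \<times> 'g" where "kDD \<equiv> kD n C d sc hh"
abbreviation "hf \<equiv> hform n C d sc hh"

lemmas brd_u = brd_ax[unfolded d_bracket_def]
lemmas lie_d = brd_u[THEN conjunct1, unfolded lie_algebra_def]

lemma DS_sub: "dv.subspace DS" using lie_d[THEN conjunct1] by (simp add: dis_subspace_eq)
lemma brd_cl: "x \<in> DS \<Longrightarrow> y \<in> DS \<Longrightarrow> brd x y \<in> DS"
  using lie_d[THEN conjunct2, THEN conjunct1] by blast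
lemma brd_addl: "x \<in> DS \<Longrightarrow> y \<in> DS \<Longrightarrow> z \<in> DS \<Longrightarrow> brd (x + y) z = brd x z + brd y z"
  using lie_d[THEN conjunct2, THEN conjunct2, THEN conjunct1] by blast
lemma brd_addr: "x \<in> DS \<Longrightarrow> y \<in> DS \<Longrightarrow> z \<in> DS \<Longrightarrow> brd x (y + z) = brd x y + brd x z"
  using lie_d[THEN conjunct2, THEN conjunct2, THEN conjunct1] by blast
lemma brd_scl: "x \<in> DS \<Longrightarrow> y \<in> DS \<Longrightarrow> brd (dscale sc c x) y = dscale sc c (brd x y)"
  using lie_d[THEN conjunct2, THEN conjunct2, THEN conjunct2, THEN conjunct1] by blast
lemma brd_scr: "x \<in> DS \<Longrightarrow> y \<in> DS \<Longrightarrow> brd x (dscale sc c y) = dscale sc c (brd x y)"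
  using lie_d[THEN conjunct2, THEN conjunct2, THEN conjunct2, THEN conjunct1] by blast
lemma brd_alt: "x \<in> DS \<Longrightarrow> brd x x = 0"
  using lie_d[THEN conjunct2, THEN conjunct2, THEN conjunct2, THEN conjunct2, THEN conjunct1] by blast

lemma DS_add: "x \<in> DS \<Longrightarrow> y \<in> DS \<Longrightarrow> x + y \<in> DS" using DS_sub dv.subspace_add by blast
lemma DS_scale: "x \<in> DS \<Longrightarrow> dscale sc c x \<in> DS" using DS_sub dv.subspace_scale by blast
lemma DS_neg: "x \<in> DS \<Longrightarrow> - x \<in> DS" using DS_sub dv.subspace_neg by blast
lemma DS_diff: "x \<in> DS \<Longrightarrow> y \<in> DS \<Longrightarrow> x - y \<in> DS" using DS_sub dv.subspace_diff by blast
lemma DS_0: "0 \<in> DS" using DS_sub dv.subspace_0 by blast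

lemma brd_0l: "y \<in> DS \<Longrightarrow> brd 0 y = 0" using brd_addl[OF DS_0 DS_0, of y] by simp
lemma brd_0r: "y \<in> DS \<Longrightarrow> brd y 0 = 0" using brd_addr[OF _ DS_0 DS_0, of y] by simp

lemma brd_anti: assumes "x \<in> DS" "y \<in> DS" shows "brd x y = - brd y x"
proof -
  have "0 = brd (x + y) (x + y)" using assms by (simp add: brd_alt DS_add)
  also have "\<dots> = (brd x x + brd y x) + (brd x y + brd y y)"
    using assms by (simp add: brd_addl brd_addr DS_add)
  finally have "brd x y + brd y x = 0" using assms by (simp add: brd_alt add.commute)
  then show ?thesis by (metis add.commute neg_eq_iff_add_eq_0)
qed

lemma brd_neg_r: assumes "x \<in> DS" "y \<in> DS" shows "brd x (- y) = - brd x y"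
proof -
  have "brd x y + brd x (- y) = 0" using brd_addr[of x y "- y"] brd_0r assms DS_neg by simp
  then show ?thesis by (metis add.commute eq_neg_iff_add_eq_0)
qed
lemma brd_neg_l: assumes "x \<in> DS" "y \<in> DS" shows "brd (- x) y = - brd x y"
proof -
  have "brd x y + brd (- x) y = 0" using brd_addl[of x "- x" y] brd_0l assms DS_neg by simp
  then show ?thesis by (metis add.commute eq_neg_iff_add_eq_0)
qed
lemma brd_diff_r: "x \<in> DS \<Longrightarrow> y \<in> DS \<Longrightarrow> z \<in> DS \<Longrightarrow> brd x (y - z) = brd x y - brd x z"
  using brd_addr[of x y "- z"] brd_neg_r DS_neg by simp
lemma brd_diff_l: "x \<in> DS \<Longrightarrow> y \<in> DS \<Longrightarrow> z \<in> DS \<Longrightarrow> brd (x - y) z = brd x z - brd y z"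
  using brd_addl[of x "- y" z] brd_neg_l DS_neg by simp

lemma brd_hk: "lam \<in> HD \<Longrightarrow> mu \<in> HD \<Longrightarrow> brd (hDD lam) (hDD mu) = 0 \<and> brd (hDD lam) (kDD mu) = 0 \<and> brd (kDD lam) (kDD mu) = 0"
  using brd_u[THEN conjunct2, THEN conjunct1] by blast

lemma brd_hx: "lam \<in> HD \<Longrightarrow> isr a \<Longrightarrow> x \<in> rs a \<Longrightarrow>
   brd (hDD lam) (xD x) = dscale sc (- hf (Phi_minus n C d u sc hh lam) a) (xD x)"
  using brd_u[THEN conjunct2, THEN conjunct2, THEN conjunct1] by blast
lemma brd_kx: "lam \<in> HD \<Longrightarrow> isr a \<Longrightarrow> x \<in> rs a \<Longrightarrow>
   brd (kDD lam) (xD x) = dscale sc (hf (Phi_plus n C d u sc hh lam) a) (xD x)"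
  using brd_u[THEN conjunct2, THEN conjunct2, THEN conjunct1] by blast
lemma brd_xx: "isr a \<Longrightarrow> isr b \<Longrightarrow> (\<lambda>x. a x + b x) \<noteq> (\<lambda>_. 0) \<Longrightarrow> x \<in> rs a \<Longrightarrow> y \<in> rs b \<Longrightarrow>
   brd (xD x) (xD y) = xD (br x y)"
  using brd_u[THEN conjunct2, THEN conjunct2, THEN conjunct2, THEN conjunct1] by blast
lemma brd_xxm: "isr a \<Longrightarrow> x \<in> rs a \<Longrightarrow> y \<in> rs (\<lambda>z. - a z) \<Longrightarrow>
   brd (xD x) (xD y) = (0, sc (1/2) (br x y), sc (1/2) (br x y))"
  using brd_u[THEN conjunct2, THEN conjunct2, THEN conjunct2, THEN conjunct2] by blast

lemma DS_eq: "DS = NS \<times> HS \<times> HS" unfolding dset_def nset_NS ..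

lemma hD_DS: "lam \<in> HD \<Longrightarrow> hDD lam \<in> DS" by (simp add: DS_eq hD_def hv_HS vs.subspace_0[OF NS_sub] vs.subspace_0[OF HS_sub])
lemma kD_DS: "lam \<in> HD \<Longrightarrow> kDD lam \<in> DS" by (simp add: DS_eq kD_def hv_HS vs.subspace_0[OF NS_sub] vs.subspace_0[OF HS_sub])
lemma xD_DS: "x \<in> NS \<Longrightarrow> xD x \<in> DS" by (simp add: DS_eq xD_def vs.subspace_0[OF HS_sub])

lemma half_half: "sc (1/2) z + sc (1/2) z = z"
  by (simp flip: vs.scale_left_distrib)

section \<open>g = n + h\<close>

definition TT where "TT = {y + H | y H. y \<in> NS \<and> H \<in> HS}"

lemma TT_span: "TT = vs.span (RV \<union> HS)"
proof -
  have hs: "vs.span HS = HS" using HS_sub by simp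
  show ?thesis unfolding TT_def vs.span_Un NS_def[symmetric] hs ..
qed

lemma TT_NS: "y \<in> NS \<Longrightarrow> y \<in> TT" unfolding TT_def using vs.subspace_0[OF HS_sub] by force
lemma TT_HS: "H \<in> HS \<Longrightarrow> H \<in> TT" unfolding TT_def using vs.subspace_0[OF NS_sub] by force

lemma br_RV_RV: assumes a: "a \<in> rs al" "al \<in> RR" and b: "b \<in> rs be" "be \<in> RR"
  shows "br a b \<in> TT"
proof -
  have aN: "a \<in> NS" "b \<in> NS" using rs_NS a b by auto
  show ?thesis
  proof (cases "(\<lambda>x. al x + be x) = (\<lambda>_. 0)")
    case False
    have "xD (br a b) \<in> DS"
      using brd_xx[OF RR_root[OF a(2)] RR_root[OF b(2)] False a(1) b(1)] brd_cl[OF xD_DS xD_DS] aN by metis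
    then show ?thesis by (auto simp: DS_eq xD_def intro: TT_NS)
  next
    case True
    then have be: "be = (\<lambda>z. - al z)" by (auto simp: fun_eq_iff eq_neg_iff_add_eq_0 add.commute)
    have "(0, sc (1/2) (br a b), sc (1/2) (br a b)) \<in> DS"
      using brd_xxm[OF RR_root[OF a(2)] a(1)] b(1) be brd_cl[OF xD_DS xD_DS] aN by metis
    then have "sc (1/2) (br a b) \<in> HS" by (simp add: DS_eq)
    then have "sc 2 (sc (1/2) (br a b)) \<in> HS" using HS_sub vs.subspace_scale by blast
    then show ?thesis by (simp add: TT_HS)
  qed
qed

lemma g_decomp: "TT = UNIV"
proof -
  have "lie_generated sc br ({hh i | i. i < n} \<union> {xp i | i. i < n} \<union> {xm i | i. i < n}) \<subseteq> TT"
    unfolding lie_generated_def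
  proof (rule Inter_lower, intro CollectI conjI)
    show "{hh i | i. i < n} \<union> {xp i | i. i < n} \<union> {xm i | i. i < n} \<subseteq> TT"
      using hh_HS xp_NS xm_NS TT_HS TT_NS by auto
    show "is_subspace sc TT" unfolding is_subspace_eq TT_span by simp
    show "\<forall>x\<in>TT. \<forall>y\<in>TT. br x y \<in> TT"
    proof (intro ballI)
      fix x y assume xy: "x \<in> TT" "y \<in> TT"
      show "br x y \<in> TT"
      proof (rule bilin_span_closed[OF vs.vector_space_axioms vs.vector_space_axioms vs.subspace_UNIV
          subset_UNIV subset_UNIV, where f=br and A="RV \<union> HS" and B="RV \<union> HS"])
        show "vs.subspace TT" unfolding TT_span by simp
        show "x \<in> vs.span (RV \<union> HS)" "y \<in> vs.span (RV \<union> HS)" using xy TT_span by auto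
        show "br a b \<in> TT" if ab: "a \<in> RV \<union> HS" "b \<in> RV \<union> HS" for a b
        proof -
          consider (RR) al be where "a \<in> rs al" "al \<in> RR" "b \<in> rs be" "be \<in> RR"
            | (RH) al where "a \<in> rs al" "al \<in> RR" "b \<in> HS"
            | (HR) be where "a \<in> HS" "b \<in> rs be" "be \<in> RR"
            | (HH) "a \<in> HS" "b \<in> HS"
            using ab unfolding RV_def by blast
          then show ?thesis
          proof cases
            case RR then show ?thesis by (rule br_RV_RV)
          next
            case RH
            have "br a b = - sc (al b) a" using rs_br[OF RH(3) RH(1)] br_anti[of a b] by simp
            moreover have "- sc (al b) a \<in> NS" using rs_NS[OF RH(2)] RH(1) NS_sub vs.subspace_neg vs.subspace_scale by blast
            ultimately show ?thesis using TT_NS by simp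
          next
            case HR
            have "br a b = sc (be a) b" using rs_br[OF HR(1) HR(2)] by simp
            moreover have "sc (be a) b \<in> NS" using rs_NS[OF HR(3)] HR(2) NS_sub vs.subspace_scale by blast
            ultimately show ?thesis using TT_NS by simp
          next
            case HH then show ?thesis using HS_abel TT_HS vs.subspace_0[OF HS_sub] by simp
          qed
        qed
      qed (auto simp: br_addl br_addr br_scl br_scr)
    qed
  qed
  then show ?thesis using gen_all by auto
qed

lemma g_elim: obtains y H where "y \<in> NS" "H \<in> HS" "z = y + H"
  using g_decomp unfolding TT_def by blast

lemma roots_RR: assumes a: "isr a" shows "a \<in> RR"
proof (rule ccontr)
  assume naR: "a \<notin> RR"
  obtain x where x: "x \<in> rs a" "x \<noteq> 0" using a unfolding is_root_def using rs_sub vs.subspace_0 by blast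
  obtain y H where yH: "y \<in> NS" "H \<in> HS" "x = y + H" by (rule g_elim)
  obtain F v where F: "y = sum v F" "finite F" "F \<subseteq> RR" "\<forall>b\<in>F. v b \<in> rs b"
    using NS_SW yH(1) unfolding SW_def by blast
  define z :: "'g \<Rightarrow> complex" where "z = (\<lambda>_. 0)"
  have zF: "z \<notin> F" using F(3) RR_nz by (auto simp: z_def)
  have aF: "a \<notin> insert z F" using naR F(3) root_nz[OF a] by (auto simp: z_def)
  define w where "w b = (if b = a then - x else if b = z then H else v b)" for b
  have "sum w (insert a (insert z F)) = - x + (H + sum v F)"
  proof -
    have "sum w (insert a (insert z F)) = w a + (w z + sum w F)"
      using aF zF F(2) by simp
    moreover have "sum w F = sum v F" using aF zF by (intro sum.cong) (auto simp: w_def)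
    moreover have "z \<noteq> a" using aF by auto
    ultimately show ?thesis by (simp add: w_def)
  qed
  then have s0: "sum w (insert a (insert z F)) = 0" using F(1) yH(3) by (simp add: algebra_simps)
  have "insert a (insert z F) \<subseteq> HD" using F(3) RR_HD zero_hdual root_HD[OF a] by (auto simp: z_def)
  moreover have "\<forall>b\<in>insert a (insert z F). w b \<in> rs b"
    using F(4) aF zF yH(2) HS_rs0 x(1) vs.subspace_neg[OF rs_sub] by (auto simp: w_def z_def)
  ultimately have "\<forall>b\<in>insert a (insert z F). w b = 0" using wt_indep[OF _ _ _ s0] F(2) by blast
  then have "- x = 0" by (simp add: w_def)
  then show False using x(2) by simp
qed

lemma rs_root_NS: "isr a \<Longrightarrow> x \<in> rs a \<Longrightarrow> x \<in> NS" using roots_RR rs_NS by blast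


definition pi :: "'g \<times> 'g \<times> 'g \<Rightarrow> 'g" where "pi v = fst v + fst (snd v) + snd (snd v)"

lemma pi_add: "pi (v + w) = pi v + pi w" by (simp add: pi_def algebra_simps)
lemma pi_scale: "pi (dscale sc c v) = sc c (pi v)" by (simp add: pi_def dscale_def vs.scale_right_distrib)
lemma pi_mh: "module_hom (dscale sc) sc pi"
  using pi_add pi_scale module_hom_iff_linear[of "dscale sc" sc pi]
  by (simp add: Vector_Spaces.linear_iff dv.vector_space_axioms vs.vector_space_axioms)
lemma pi_0: "pi 0 = 0" by (simp add: pi_def)
lemma pi_neg: "pi (- v) = - pi v" by (simp add: pi_def algebra_simps)
lemma pi_diff: "pi (v - w) = pi v - pi w" by (simp add: pi_def algebra_simps)
lemma pi_xD: "pi (xD x) = x" by (simp add: pi_def xD_def)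
lemma pi_hD: "pi (hDD l) = hv l" by (simp add: pi_def hD_def)
lemma pi_kD: "pi (kDD l) = hv l" by (simp add: pi_def kD_def)

lemma xD_mh: "module_hom sc (dscale sc) xD"
  using module_hom_iff_linear[of sc "dscale sc" xD]
  by (simp add: Vector_Spaces.linear_iff dv.vector_space_axioms vs.vector_space_axioms xD_def dscale_def)

lemma xD_span: "x \<in> vs.span S \<Longrightarrow> xD x \<in> dv.span (xD ` S)"
  using module_hom.span_image[OF xD_mh, of S] by auto

definition GD where "GD = {xD x | x. x \<in> RV} \<union> {hDD l | l. l \<in> HD} \<union> {kDD l | l. l \<in> HD}"

lemma GD_DS: "GD \<subseteq> DS"
  unfolding GD_def RV_def using xD_DS hD_DS kD_DS rs_NS by blast

lemma DS_span: "DS \<subseteq> dv.span GD"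
proof
  fix v assume v: "v \<in> DS"
  obtain y H K where v': "v = (y, H, K)" "y \<in> NS" "H \<in> HS" "K \<in> HS" using v by (auto simp: DS_eq)
  obtain l where l: "l \<in> HD" "hv l = H" using hv_surj[OF v'(3)] by blast
  obtain m where m: "m \<in> HD" "hv m = K" using hv_surj[OF v'(4)] by blast
  have "v = xD y + hDD l + kDD m" using v' l m by (simp add: xD_def hD_def kD_def)
  moreover have "xD y \<in> dv.span GD"
  proof -
    have "xD y \<in> dv.span (xD ` RV)" using xD_span v'(2) unfolding NS_def by blast
    moreover have "xD ` RV \<subseteq> GD" unfolding GD_def by blast
    ultimately show ?thesis using dv.span_mono by blast
  qed
  moreover have "hDD l \<in> dv.span GD" "kDD m \<in> dv.span GD"
    using l m by (auto simp: GD_def intro!: dv.span_base)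
  ultimately show "v \<in> dv.span GD" by (simp add: dv.span_add)
qed

lemma bilin_DS:
  assumes S: "module.subspace s2 S" and vs2: "vector_space s2"
    and addl: "\<And>x y z. x \<in> DS \<Longrightarrow> y \<in> DS \<Longrightarrow> z \<in> DS \<Longrightarrow> f (x + y) z = f x z + f y z"
    and addr: "\<And>x y z. x \<in> DS \<Longrightarrow> y \<in> DS \<Longrightarrow> z \<in> DS \<Longrightarrow> f x (y + z) = f x y + f x z"
    and scl: "\<And>c x y. x \<in> DS \<Longrightarrow> y \<in> DS \<Longrightarrow> f (dscale sc c x) y = s2 c (f x y)"
    and scr: "\<And>c x y. x \<in> DS \<Longrightarrow> y \<in> DS \<Longrightarrow> f x (dscale sc c y) = s2 c (f x y)"
    and AD: "A \<subseteq> DS" and BD: "B \<subseteq> DS"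
    and gen: "\<And>a b. a \<in> A \<Longrightarrow> b \<in> B \<Longrightarrow> f a b \<in> S"
    and x: "x \<in> dv.span A" and y: "y \<in> dv.span B"
  shows "f x y \<in> S"
  by (rule bilin_span_closed[OF dv.vector_space_axioms vs2 DS_sub AD BD S addl addr scl scr gen x y])

definition LG where "LG = {hDD l - kDD l | l. l \<in> rad_u n u sc hh}"
definition LL where "LL = dv.span LG"

lemma rad_HD: "l \<in> rad_u n u sc hh \<Longrightarrow> l \<in> HD" unfolding rad_u_def by blast

lemma LG_DS: "LG \<subseteq> DS" unfolding LG_def using rad_HD hD_DS kD_DS DS_diff by blast
lemma LL_DS: "LL \<subseteq> DS" unfolding LL_def using LG_DS DS_sub dv.span_minimal by blast
lemma LL_sub: "dv.subspace LL" unfolding LL_def by simp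

lemma hf_minus0: "Phi n C d u sc hh l = (\<lambda>_. 0) \<Longrightarrow> hf (Phi_minus n C d u sc hh l) a = - l (hv a)"
  by (simp add: hform_def Phi_minus_def)
lemma hf_plus0: "Phi n C d u sc hh l = (\<lambda>_. 0) \<Longrightarrow> hf (Phi_plus n C d u sc hh l) a = l (hv a)"
  by (simp add: hform_def Phi_plus_def)

lemma brd_GD_LG: assumes a: "a \<in> GD" and b: "b \<in> LG" shows "brd a b = 0"
proof -
  obtain l where l: "l \<in> rad_u n u sc hh" "b = hDD l - kDD l" using b unfolding LG_def by blast
  have lH: "l \<in> HD" using rad_HD[OF l(1)] .
  have P: "Phi n C d u sc hh l = (\<lambda>_. 0)" using Phi_rad[OF l(1)] .
  consider (x) x al where "a = xD x" "x \<in> rs al" "al \<in> RR" | (h) m where "a = hDD m" "m \<in> HD"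
    | (k) m where "a = kDD m" "m \<in> HD"
    using a unfolding GD_def RV_def by blast
  then show ?thesis
  proof cases
    case x
    have xN: "x \<in> NS" using rs_NS x by blast
    have r: "isr al" using RR_root[OF x(3)] .
    have "brd a b = brd (xD x) (hDD l) - brd (xD x) (kDD l)"
      unfolding l(2) x(1) by (rule brd_diff_r[OF xD_DS[OF xN] hD_DS[OF lH] kD_DS[OF lH]])
    also have "\<dots> = - brd (hDD l) (xD x) + brd (kDD l) (xD x)"
      using brd_anti[OF xD_DS[OF xN] hD_DS[OF lH]] brd_anti[OF xD_DS[OF xN] kD_DS[OF lH]] by simp
    also have "\<dots> = 0"
      unfolding brd_hx[OF lH r x(2)] brd_kx[OF lH r x(2)] hf_minus0[OF P] hf_plus0[OF P] by simp
    finally show ?thesis .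
  next
    case h
    then show ?thesis using brd_diff_r[OF hD_DS[OF h(2)] hD_DS[OF lH] kD_DS[OF lH]] brd_hk[OF h(2) lH]
      unfolding l(2) by simp
  next
    case k
    have "brd (kDD m) (hDD l) = 0"
      using brd_anti[OF kD_DS[OF k(2)] hD_DS[OF lH]] brd_hk[OF lH k(2)] by simp
    then show ?thesis using brd_diff_r[OF kD_DS[OF k(2)] hD_DS[OF lH] kD_DS[OF lH]] brd_hk[OF k(2) lH]
      unfolding l(2) k(1) by simp
  qed
qed

lemma brd_DS_LL: assumes v: "v \<in> DS" and w: "w \<in> LL" shows "brd v w = 0"
proof -
  have "brd v w \<in> {0}"
    by (rule bilin_DS[OF dv.subspace_single_0 dv.vector_space_axioms brd_addl brd_addr brd_scl brd_scr GD_DS LG_DS])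
       (use brd_GD_LG DS_span v w in \<open>auto simp: LL_def\<close>)
  then show ?thesis by simp
qed

lemma LL_ideal: "is_ideal DS (dscale sc) brd LL"
  unfolding is_ideal_def dis_subspace_eq using LL_DS LL_sub brd_DS_LL dv.subspace_0[OF LL_sub] by auto

lemma LL_solvable: "solvable (dscale sc) brd LL"
proof -
  have z: "brd x y = 0" if "x \<in> LL" "y \<in> LL" for x y
    using brd_DS_LL that LL_DS by blast
  have l0: "0 \<in> LL" using dv.subspace_0[OF LL_sub] .
  have "{brd x y | x y. x \<in> LL \<and> y \<in> LL} \<subseteq> {0}" using z by blast
  moreover have "0 \<in> {brd x y | x y. x \<in> LL \<and> y \<in> LL}"
    using z[OF l0 l0] l0 by (intro CollectI exI[of _ 0] conjI) auto
  ultimately have "{brd x y | x y. x \<in> LL \<and> y \<in> LL} = {0}" by blast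
  then have "derived (dscale sc) brd LL (Suc 0) = {0}" by (simp add: dlin_span_eq)
  then show ?thesis unfolding solvable_def by blast
qed


definition MG where "MG = {xD x | x al. isr al \<and> x \<in> rs al} \<union> {hDD l + kDD l | l. l \<in> HD}"
definition MM where "MM = dv.span MG"

lemma MG_DS: "MG \<subseteq> DS" unfolding MG_def using xD_DS rs_root_NS hD_DS kD_DS DS_add by blast
lemma MM_DS: "MM \<subseteq> DS" unfolding MM_def using MG_DS DS_sub dv.span_minimal by blast
lemma MM_sub: "dv.subspace MM" unfolding MM_def by simp

lemma zero_trip: "(0::'g \<times> 'g \<times> 'g) = (0, 0, 0)" by (simp add: zero_prod_def)

lemma hk_eq: "hDD l + kDD l = (0, hv l, hv l)" by (simp add: hD_def kD_def)

lemma HH_MM: "H \<in> HS \<Longrightarrow> (0, H, H) \<in> MM"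
proof -
  assume "H \<in> HS"
  then obtain l where "l \<in> HD" "hv l = H" using hv_surj by blast
  then have "hDD l + kDD l \<in> MG" unfolding MG_def by blast
  then show ?thesis unfolding MM_def using hk_eq[of l] \<open>hv l = H\<close> by (metis dv.span_base)
qed

lemma xD_MM: "isr a \<Longrightarrow> x \<in> rs a \<Longrightarrow> xD x \<in> MM"
  unfolding MM_def MG_def by (rule dv.span_base) blast

lemma brd_xD_xD_MM: assumes a: "isr a" "x \<in> rs a" and b: "isr b" "y \<in> rs b"
  shows "brd (xD x) (xD y) \<in> MM"
proof (cases "(\<lambda>z. a z + b z) = (\<lambda>_. 0)")
  case False
  have e: "brd (xD x) (xD y) = xD (br x y)" by (rule brd_xx[OF a(1) b(1) False a(2) b(2)])
  have brs: "br x y \<in> rs (\<lambda>z. a z + b z)" by (rule br_rs[OF a(2) b(2)])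
  show ?thesis
  proof (cases "br x y = 0")
    case True then show ?thesis using e dv.subspace_0[OF MM_sub] by (simp add: xD_def zero_trip)
  next
    case nz: False
    have "isr (\<lambda>z. a z + b z)" unfolding is_root_def
      using hdual_plus[OF root_HD[OF a(1)] root_HD[OF b(1)]] False brs nz by blast
    then show ?thesis using e xD_MM brs by simp
  qed
next
  case True
  then have be: "b = (\<lambda>z. - a z)" by (auto simp: fun_eq_iff eq_neg_iff_add_eq_0 add.commute)
  have e: "brd (xD x) (xD y) = (0, sc (1/2) (br x y), sc (1/2) (br x y))"
    using brd_xxm[OF a(1) a(2)] b(2) be by simp
  have "brd (xD x) (xD y) \<in> DS"
    using brd_cl[OF xD_DS xD_DS] rs_root_NS a b by blast
  then have "sc (1/2) (br x y) \<in> HS" using e by (simp add: DS_eq)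
  then show ?thesis using e HH_MM by simp
qed

lemma brd_GD_MG: assumes a: "a \<in> GD" and b: "b \<in> MG" shows "brd a b \<in> MM"
proof -
  have Msc: "dscale sc c v \<in> MM" if "v \<in> MM" for c v using that MM_sub dv.subspace_scale by blast
  have Madd: "v + w \<in> MM" if "v \<in> MM" "w \<in> MM" for v w using that MM_sub dv.subspace_add by blast
  have M0: "0 \<in> MM" using MM_sub dv.subspace_0 by blast
  have Mneg: "- v \<in> MM" if "v \<in> MM" for v using that MM_sub dv.subspace_neg by blast
  consider (x) x al where "a = xD x" "x \<in> rs al" "al \<in> RR" | (h) m where "a = hDD m" "m \<in> HD"
    | (k) m where "a = kDD m" "m \<in> HD"
    using a unfolding GD_def RV_def by blast
  note acases = this
  consider (bx) y be where "b = xD y" "isr be" "y \<in> rs be" | (bh) l where "b = hDD l + kDD l" "l \<in> HD"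
    using b unfolding MG_def by blast
  then show ?thesis
  proof cases
    case bx
    have yD: "xD y \<in> DS" using xD_DS rs_root_NS bx by blast
    from acases show ?thesis
    proof cases
      case x then show ?thesis using brd_xD_xD_MM[OF RR_root[OF x(3)] x(2) bx(2) bx(3)] bx(1) by simp
    next
      case h then show ?thesis using brd_hx[OF h(2) bx(2) bx(3)] bx(1) Msc xD_MM[OF bx(2) bx(3)] by simp
        (use Mneg Msc xD_MM[OF bx(2) bx(3)] in blast)
    next
      case k then show ?thesis using brd_kx[OF k(2) bx(2) bx(3)] bx(1) Msc xD_MM[OF bx(2) bx(3)] by simp
    qed
  next
    case bh
    have hD: "hDD l \<in> DS" "kDD l \<in> DS" using hD_DS kD_DS bh(2) by auto
    from acases show ?thesis
    proof cases
      case x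
      have r: "isr al" using RR_root[OF x(3)] .
      have xD': "xD x \<in> DS" using xD_DS rs_NS x by blast
      have "brd a b = brd (xD x) (hDD l) + brd (xD x) (kDD l)"
        unfolding x(1) bh(1) by (rule brd_addr[OF xD' hD])
      also have "\<dots> = - brd (hDD l) (xD x) + - brd (kDD l) (xD x)"
        using brd_anti[OF xD' hD(1)] brd_anti[OF xD' hD(2)] by simp
      finally have e: "brd a b = - dscale sc (- hf (Phi_minus n C d u sc hh l) al) (xD x)
          + - dscale sc (hf (Phi_plus n C d u sc hh l) al) (xD x)"
        unfolding brd_hx[OF bh(2) r x(2)] brd_kx[OF bh(2) r x(2)] .
      have "xD x \<in> MM" using xD_MM[OF r x(2)] .
      then show ?thesis unfolding e using Msc Madd MM_sub dv.subspace_neg by meson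
    next
      case h
      have "brd a b = brd (hDD m) (hDD l) + brd (hDD m) (kDD l)"
        unfolding h(1) bh(1) by (rule brd_addr[OF hD_DS[OF h(2)] hD])
      then show ?thesis using brd_hk[OF h(2) bh(2)] M0 by simp
    next
      case k
      have "brd a b = brd (kDD m) (hDD l) + brd (kDD m) (kDD l)"
        unfolding k(1) bh(1) by (rule brd_addr[OF kD_DS[OF k(2)] hD])
      moreover have "brd (kDD m) (hDD l) = 0"
        using brd_anti[OF kD_DS[OF k(2)] hD(1)] brd_hk[OF bh(2) k(2)] by simp
      ultimately show ?thesis using brd_hk[OF k(2) bh(2)] M0 by simp
    qed
  qed
qed

lemma MM_ideal: "is_ideal DS (dscale sc) brd MM"
  unfolding is_ideal_def dis_subspace_eq
proof (intro conjI ballI)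
  show "MM \<subseteq> DS" by (rule MM_DS)
  show "dv.subspace MM" by (rule MM_sub)
  fix v w assume v: "v \<in> DS" and w: "w \<in> MM"
  show "brd v w \<in> MM"
    by (rule bilin_DS[OF MM_sub dv.vector_space_axioms brd_addl brd_addr brd_scl brd_scr GD_DS MG_DS brd_GD_MG])
       (use DS_span v w in \<open>auto simp: MM_def\<close>)
qed


section \<open>m is isomorphic to g\<close>

lemma pi_trip: "pi (a, b, c) = a + b + c" by (simp add: pi_def)

lemma pi_xx: assumes a: "isr a" "x \<in> rs a" and b: "isr b" "y \<in> rs b"
  shows "pi (brd (xD x) (xD y)) = br x y"
proof (cases "(\<lambda>z. a z + b z) = (\<lambda>_. 0)")
  case False
  then show ?thesis using brd_xx[OF a(1) b(1) False a(2) b(2)] by (simp add: pi_xD)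
next
  case True
  then have be: "b = (\<lambda>z. - a z)" by (auto simp: fun_eq_iff eq_neg_iff_add_eq_0 add.commute)
  have e: "brd (xD x) (xD y) = (0, sc (1/2) (br x y), sc (1/2) (br x y))"
    using brd_xxm[OF a(1) a(2)] b(2) be by simp
  show ?thesis unfolding e pi_trip by (simp add: half_half add.assoc)
qed

lemma hk_DS: "l \<in> HD \<Longrightarrow> hDD l + kDD l \<in> DS" using hD_DS kD_DS DS_add by blast

lemma pi_hkx: assumes l: "l \<in> HD" and a: "isr a" "x \<in> rs a"
  shows "pi (brd (hDD l + kDD l) (xD x)) = br (pi (hDD l + kDD l)) (pi (xD x))"
proof -
  have xD': "xD x \<in> DS" using xD_DS rs_root_NS a by blast
  have "brd (hDD l + kDD l) (xD x) = brd (hDD l) (xD x) + brd (kDD l) (xD x)"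
    by (rule brd_addl[OF hD_DS[OF l] kD_DS[OF l] xD'])
  then have "pi (brd (hDD l + kDD l) (xD x))
      = sc (- hf (Phi_minus n C d u sc hh l) a) x + sc (hf (Phi_plus n C d u sc hh l) a) x"
    unfolding brd_hx[OF l a] brd_kx[OF l a] by (simp add: pi_add pi_scale pi_xD pi_diff vs.scale_minus_left)
  also have "\<dots> = sc (l (hv a) + l (hv a)) x"
    by (simp add: hform_def Phi_minus_def Phi_plus_def flip: vs.scale_left_distrib)
  also have "\<dots> = sc (a (hv l) + a (hv l)) x" using hv_sym[OF l root_HD[OF a(1)]] by simp
  also have "\<dots> = br (hv l + hv l) x" using rs_br[OF hv_HS[OF l] a(2)] by (simp only: br_addl vs.scale_left_distrib)
  finally show ?thesis by (simp add: pi_add pi_hD pi_kD pi_xD)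
qed

lemma pi_anti: assumes "a \<in> DS" "b \<in> DS" "pi (brd a b) = br (pi a) (pi b)"
  shows "pi (brd b a) = br (pi b) (pi a)"
  using assms brd_anti[OF assms(2) assms(1)] br_anti[of "pi b" "pi a"] by (simp add: pi_neg)

lemma hk_hk_zero: assumes "l \<in> HD" "m \<in> HD" shows "brd (hDD l + kDD l) (hDD m + kDD m) = 0"
proof -
  have D: "hDD l \<in> DS" "kDD l \<in> DS" "hDD m \<in> DS" "kDD m \<in> DS" using assms hD_DS kD_DS by auto
  have "brd (kDD l) (hDD m) = 0" using brd_anti[OF D(2) D(3)] brd_hk[OF assms(2) assms(1)] by simp
  then show ?thesis
    using brd_hk[OF assms] D by (simp add: brd_addl brd_addr DS_add)
qed

lemma pi_hom_MG: assumes a: "a \<in> MG" and b: "b \<in> MG" shows "pi (brd a b) = br (pi a) (pi b)"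
proof -
  have hkc: "P" if "\<And>x al. isr al \<Longrightarrow> x \<in> rs al \<Longrightarrow> v = xD x \<Longrightarrow> P" "\<And>l. l \<in> HD \<Longrightarrow> v = hDD l + kDD l \<Longrightarrow> P"
    and "v \<in> MG" for v P using that unfolding MG_def by blast
  show ?thesis
  proof (rule hkc[OF _ _ a])
    fix x al assume x: "isr al" "x \<in> rs al" "a = xD x"
    show ?thesis
    proof (rule hkc[OF _ _ b])
      fix y be assume y: "isr be" "y \<in> rs be" "b = xD y"
      show ?thesis using pi_xx[OF x(1,2) y(1,2)] x(3) y(3) by (simp add: pi_xD)
    next
      fix l assume l: "l \<in> HD" "b = hDD l + kDD l"
      show ?thesis using pi_anti[OF hk_DS[OF l(1)] xD_DS[OF rs_root_NS[OF x(1,2)]] pi_hkx[OF l(1) x(1,2)]] x(3) l(2) by simp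
    qed
  next
    fix l assume l: "l \<in> HD" "a = hDD l + kDD l"
    show ?thesis
    proof (rule hkc[OF _ _ b])
      fix y be assume y: "isr be" "y \<in> rs be" "b = xD y"
      show ?thesis using pi_hkx[OF l(1) y(1,2)] l(2) y(3) by simp
    next
      fix m assume m: "m \<in> HD" "b = hDD m + kDD m"
      have "br (pi a) (pi b) = 0" unfolding l(2) m(2) pi_add pi_hD pi_kD
        using hv_HS l(1) m(1) HS_sub vs.subspace_add HS_abel by metis
      then show ?thesis using hk_hk_zero[OF l(1) m(1)] l(2) m(2) by (simp add: pi_0)
    qed
  qed
qed

lemma pi_hom_MM: assumes v: "v \<in> MM" and w: "w \<in> MM" shows "pi (brd v w) = br (pi v) (pi w)"
proof -
  have "pi (brd v w) - br (pi v) (pi w) \<in> {0}"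
  proof (rule bilin_DS[OF vs.subspace_single_0 vs.vector_space_axioms _ _ _ _ MG_DS MG_DS, where f="\<lambda>v w. pi (brd v w) - br (pi v) (pi w)"])
    show "pi (brd a b) - br (pi a) (pi b) \<in> {0}" if "a \<in> MG" "b \<in> MG" for a b using pi_hom_MG[OF that] by simp
    show "v \<in> dv.span MG" "w \<in> dv.span MG" using v w by (auto simp: MM_def)
  qed (simp_all add: brd_addl brd_addr brd_scl brd_scr pi_add pi_scale br_addl br_addr br_scl br_scr
         vs.scale_right_diff_distrib algebra_simps)
  then show ?thesis by simp
qed

lemma MM_MS: "MM \<subseteq> {(y, H, H) | y H. y \<in> NS \<and> H \<in> HS}"
  unfolding MM_def
proof (rule dv.span_minimal)
  show "MG \<subseteq> {(y, H, H) | y H. y \<in> NS \<and> H \<in> HS}"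
    unfolding MG_def using rs_root_NS hv_HS vs.subspace_0[OF HS_sub] vs.subspace_0[OF NS_sub]
    by (auto simp: xD_def hk_eq)
  show "dv.subspace {(y, H, H) | y H. y \<in> NS \<and> H \<in> HS}"
  proof (rule dv.subspaceI)
    show "0 \<in> {(y, H, H) | y H. y \<in> NS \<and> H \<in> HS}"
      using vs.subspace_0[OF HS_sub] vs.subspace_0[OF NS_sub] by (auto simp: zero_trip)
    show "x + y \<in> {(y, H, H) | y H. y \<in> NS \<and> H \<in> HS}"
      if "x \<in> {(y, H, H) | y H. y \<in> NS \<and> H \<in> HS}" "y \<in> {(y, H, H) | y H. y \<in> NS \<and> H \<in> HS}" for x y
      using that vs.subspace_add[OF HS_sub] vs.subspace_add[OF NS_sub] by auto
    show "dscale sc c x \<in> {(y, H, H) | y H. y \<in> NS \<and> H \<in> HS}"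
      if "x \<in> {(y, H, H) | y H. y \<in> NS \<and> H \<in> HS}" for c x
      using that vs.subspace_scale[OF HS_sub] vs.subspace_scale[OF NS_sub] by (auto simp: dscale_def)
  qed
qed

lemma two_inj: fixes H H' :: 'g shows "H + H = H' + H' \<Longrightarrow> H = H'"
proof -
  assume e: "H + H = H' + H'"
  have "sc (1/2) (H + H) = H" by (simp add: vs.scale_right_distrib half_half)
  moreover have "sc (1/2) (H' + H') = H'" by (simp add: vs.scale_right_distrib half_half)
  ultimately show ?thesis using e by metis
qed

lemma pi_inj_MM: "inj_on pi MM"
proof (rule inj_onI)
  fix v w assume v: "v \<in> MM" and w: "w \<in> MM" and e: "pi v = pi w"
  obtain y H where y: "v = (y, H, H)" "y \<in> NS" "H \<in> HS" using MM_MS v by blast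
  obtain y' H' where y': "w = (y', H, H')" "y' \<in> NS" "H' \<in> HS" if False
    using that by blast
  obtain y' H' where y': "w = (y', H', H')" "y' \<in> NS" "H' \<in> HS" using MM_MS w by blast
  have e': "y + H + H = y' + H' + H'" using e y y' by (simp add: pi_trip)
  have "y - y' = (H' + H') - (H + H)" using e' by (simp add: algebra_simps)
  moreover have "y - y' \<in> NS" using y(2) y'(2) NS_sub vs.subspace_diff by blast
  moreover have "(H' + H') - (H + H) \<in> HS" using y(3) y'(3) HS_sub vs.subspace_diff vs.subspace_add by metis
  ultimately have "y - y' = 0" using NS_HS_zero by metis
  then have yy: "y = y'" by simp
  then have "H + H = H' + H'" using e' by (simp add: add.assoc)
  then have "H = H'" by (rule two_inj)
  then show "v = w" using y y' yy by simp
qed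

lemma pi_surj_MM: "pi ` MM = UNIV"
proof -
  have "z \<in> pi ` MM" for z
  proof -
    obtain y H where yH: "y \<in> NS" "H \<in> HS" "z = y + H" by (rule g_elim)
    have "xD y \<in> MM"
    proof -
      have "xD y \<in> dv.span (xD ` RV)" using xD_span yH(1) unfolding NS_def by blast
      moreover have "xD ` RV \<subseteq> MG" unfolding MG_def RV_def using RR_root by blast
      ultimately show ?thesis unfolding MM_def using dv.span_mono by blast
    qed
    moreover have "(0, sc (1/2) H, sc (1/2) H) \<in> MM"
      using HH_MM vs.subspace_scale[OF HS_sub yH(2)] by blast
    ultimately have "xD y + (0, sc (1/2) H, sc (1/2) H) \<in> MM" using MM_sub dv.subspace_add by blast
    moreover have "pi (xD y + (0, sc (1/2) H, sc (1/2) H)) = z"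
      using yH(3) by (simp add: pi_add pi_xD pi_trip half_half add.assoc)
    ultimately show ?thesis by (metis image_eqI)
  qed
  then show ?thesis by blast
qed

lemma MM_iso: "lie_iso MM (+) (dscale sc) brd UNIV (+) sc br pi"
  unfolding lie_iso_def bij_betw_def
  using pi_inj_MM pi_surj_MM pi_add pi_hom_MM pi_scale by blast


section \<open>The case u = 0\<close>

lemma pi_hx0: assumes u0: "\<forall>i<n. \<forall>j<n. u i j = 0" and l: "l \<in> HD" and a: "isr a" "x \<in> rs a"
  shows "pi (brd (hDD l) (xD x)) = br (pi (hDD l)) (pi (xD x))"
proof -
  have P: "Phi n C d u sc hh l = (\<lambda>_. 0)" by (rule Phi_u0[OF u0])
  have "pi (brd (hDD l) (xD x)) = sc (l (hv a)) x"
    unfolding brd_hx[OF l a] hf_minus0[OF P] by (simp add: pi_scale pi_xD)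
  also have "\<dots> = br (hv l) x" using rs_br[OF hv_HS[OF l] a(2)] hv_sym[OF l root_HD[OF a(1)]] by simp
  finally show ?thesis by (simp add: pi_hD pi_xD)
qed

lemma pi_kx0: assumes u0: "\<forall>i<n. \<forall>j<n. u i j = 0" and l: "l \<in> HD" and a: "isr a" "x \<in> rs a"
  shows "pi (brd (kDD l) (xD x)) = br (pi (kDD l)) (pi (xD x))"
proof -
  have P: "Phi n C d u sc hh l = (\<lambda>_. 0)" by (rule Phi_u0[OF u0])
  have "pi (brd (kDD l) (xD x)) = sc (l (hv a)) x"
    unfolding brd_kx[OF l a] hf_plus0[OF P] by (simp add: pi_scale pi_xD)
  also have "\<dots> = br (hv l) x" using rs_br[OF hv_HS[OF l] a(2)] hv_sym[OF l root_HD[OF a(1)]] by simp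
  finally show ?thesis by (simp add: pi_kD pi_xD)
qed

lemma pi_hom_GD: assumes u0: "\<forall>i<n. \<forall>j<n. u i j = 0" and a: "a \<in> GD" and b: "b \<in> GD"
  shows "pi (brd a b) = br (pi a) (pi b)"
proof -
  have gc: "P" if "\<And>x al. al \<in> RR \<Longrightarrow> x \<in> rs al \<Longrightarrow> v = xD x \<Longrightarrow> P" "\<And>l. l \<in> HD \<Longrightarrow> v = hDD l \<Longrightarrow> P"
    "\<And>l. l \<in> HD \<Longrightarrow> v = kDD l \<Longrightarrow> P" and "v \<in> GD" for v P using that unfolding GD_def RV_def by blast
  have hhz: "br (pi (hDD l)) (pi (hDD m)) = 0" "br (pi (hDD l)) (pi (kDD m)) = 0"
     "br (pi (kDD l)) (pi (hDD m)) = 0" "br (pi (kDD l)) (pi (kDD m)) = 0" if "l \<in> HD" "m \<in> HD" for l m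
    using that hv_HS HS_abel by (simp_all add: pi_hD pi_kD)
  have kh: "brd (kDD l) (hDD m) = 0" if "l \<in> HD" "m \<in> HD" for l m
    using brd_anti[OF kD_DS[OF that(1)] hD_DS[OF that(2)]] brd_hk[OF that(2) that(1)] by simp
  show ?thesis
  proof (rule gc[OF _ _ _ a])
    fix x al assume x: "al \<in> RR" "x \<in> rs al" "a = xD x"
    have r: "isr al" using RR_root[OF x(1)] .
    have xD': "xD x \<in> DS" using xD_DS rs_NS x by blast
    show ?thesis
    proof (rule gc[OF _ _ _ b])
      fix y be assume y: "be \<in> RR" "y \<in> rs be" "b = xD y"
      show ?thesis using pi_xx[OF r x(2) RR_root[OF y(1)] y(2)] x(3) y(3) by (simp add: pi_xD)
    next
      fix l assume l: "l \<in> HD" "b = hDD l"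
      show ?thesis using pi_anti[OF hD_DS[OF l(1)] xD' pi_hx0[OF u0 l(1) r x(2)]] x(3) l(2) by simp
    next
      fix l assume l: "l \<in> HD" "b = kDD l"
      show ?thesis using pi_anti[OF kD_DS[OF l(1)] xD' pi_kx0[OF u0 l(1) r x(2)]] x(3) l(2) by simp
    qed
  next
    fix l assume l: "l \<in> HD" "a = hDD l"
    show ?thesis
    proof (rule gc[OF _ _ _ b])
      fix y be assume y: "be \<in> RR" "y \<in> rs be" "b = xD y"
      show ?thesis using pi_hx0[OF u0 l(1) RR_root[OF y(1)] y(2)] l(2) y(3) by simp
    next
      fix m assume m: "m \<in> HD" "b = hDD m"
      show ?thesis using brd_hk[OF l(1) m(1)] hhz[OF l(1) m(1)] l(2) m(2) by (simp add: pi_0)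
    next
      fix m assume m: "m \<in> HD" "b = kDD m"
      show ?thesis using brd_hk[OF l(1) m(1)] hhz[OF l(1) m(1)] l(2) m(2) by (simp add: pi_0)
    qed
  next
    fix l assume l: "l \<in> HD" "a = kDD l"
    show ?thesis
    proof (rule gc[OF _ _ _ b])
      fix y be assume y: "be \<in> RR" "y \<in> rs be" "b = xD y"
      show ?thesis using pi_kx0[OF u0 l(1) RR_root[OF y(1)] y(2)] l(2) y(3) by simp
    next
      fix m assume m: "m \<in> HD" "b = hDD m"
      show ?thesis using kh[OF l(1) m(1)] hhz[OF l(1) m(1)] l(2) m(2) by (simp add: pi_0)
    next
      fix m assume m: "m \<in> HD" "b = kDD m"
      show ?thesis using brd_hk[OF l(1) m(1)] hhz[OF l(1) m(1)] l(2) m(2) by (simp add: pi_0)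
    qed
  qed
qed

lemma pi_hom_DS: assumes u0: "\<forall>i<n. \<forall>j<n. u i j = 0" and v: "v \<in> DS" and w: "w \<in> DS"
  shows "pi (brd v w) = br (pi v) (pi w)"
proof -
  have "pi (brd v w) - br (pi v) (pi w) \<in> {0}"
  proof (rule bilin_DS[OF vs.subspace_single_0 vs.vector_space_axioms _ _ _ _ GD_DS GD_DS, where f="\<lambda>v w. pi (brd v w) - br (pi v) (pi w)"])
    show "pi (brd a b) - br (pi a) (pi b) \<in> {0}" if "a \<in> GD" "b \<in> GD" for a b using pi_hom_GD[OF u0 that] by simp
    show "v \<in> dv.span GD" "w \<in> dv.span GD" using v w DS_span by auto
  qed (simp_all add: brd_addl brd_addr brd_scl brd_scr pi_add pi_scale br_addl br_addr br_scl br_scr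
         vs.scale_right_diff_distrib algebra_simps)
  then show ?thesis by simp
qed

lemma pi_LL: "w \<in> LL \<Longrightarrow> pi w = 0"
proof -
  assume w: "w \<in> LL"
  have "LL \<subseteq> {v. pi v = 0}" unfolding LL_def
  proof (rule dv.span_minimal)
    show "LG \<subseteq> {v. pi v = 0}" unfolding LG_def by (auto simp: pi_diff pi_hD pi_kD)
    show "dv.subspace {v. pi v = 0}" by (rule module_hom.subspace_kernel[OF pi_mh])
  qed
  then show ?thesis using w by blast
qed

lemma ker_LL: assumes u0: "\<forall>i<n. \<forall>j<n. u i j = 0" and v: "v \<in> DS" and p: "pi v = 0" shows "v \<in> LL"
proof -
  obtain y H K where v': "v = (y, H, K)" "y \<in> NS" "H \<in> HS" "K \<in> HS" using v by (auto simp: DS_eq)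
  have e: "y + H + K = 0" using p v' by (simp add: pi_trip)
  then have "y + (H + K) = 0" by (simp add: add.assoc)
  then have "y = - (H + K)" by (simp only: eq_neg_iff_add_eq_0)
  moreover have "- (H + K) \<in> HS" using v' HS_sub vs.subspace_add vs.subspace_neg by blast
  ultimately have "y \<in> HS" by simp
  then have y0: "y = 0" using NS_HS_zero[OF v'(2)] by blast
  then have "K + H = 0" using e by (simp add: add.commute)
  then have K: "K = - H" by (simp only: eq_neg_iff_add_eq_0)
  obtain l where l: "l \<in> HD" "hv l = H" using hv_surj[OF v'(3)] by blast
  have "l \<in> rad_u n u sc hh" unfolding rad_u_def using l u0 by (simp add: uform_def)
  then have "hDD l - kDD l \<in> LL" unfolding LL_def LG_def by (intro dv.span_base) blast
  moreover have "hDD l - kDD l = v" using v' y0 K l by (simp add: hD_def kD_def)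
  ultimately show ?thesis by simp
qed

lemma pi_surj_DS: "pi ` DS = UNIV"
proof -
  have "z \<in> pi ` DS" for z
  proof -
    obtain y H where yH: "y \<in> NS" "H \<in> HS" "z = y + H" by (rule g_elim)
    have "(y, H, 0) \<in> DS" using yH vs.subspace_0[OF HS_sub] by (simp add: DS_eq)
    moreover have "pi (y, H, 0) = z" using yH by (simp add: pi_trip)
    ultimately show ?thesis by (metis image_eqI)
  qed
  then show ?thesis by blast
qed

section \<open>Quotient\<close>

lemma coset_mem: "x \<in> coset LL a \<longleftrightarrow> (\<exists>i\<in>LL. x = a + i)" unfolding coset_def by blast

lemma coset_self: "a \<in> coset LL a" unfolding coset_def
  by (rule CollectI, rule exI[of _ 0]) (simp add: dv.subspace_0[OF LL_sub])

lemma coset_eq: assumes ab: "a - b \<in> LL" shows "coset LL a = coset LL b"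
proof (rule Set.set_eqI)
  fix x
  have 1: "x \<in> coset LL b" if xa: "x \<in> coset LL a"
  proof -
    from xa obtain i where i: "i \<in> LL" "x = a + i" unfolding coset_mem by blast
    have "b + ((a - b) + i) = (b + (a - b)) + i" by (rule add.assoc[symmetric])
    also have "b + (a - b) = a" by simp
    finally have e: "x = b + ((a - b) + i)" using i(2) by simp
    have "(a - b) + i \<in> LL" using ab i(1) LL_sub dv.subspace_add by blast
    then show ?thesis unfolding coset_mem using e by blast
  qed
  have 2: "x \<in> coset LL a" if xb: "x \<in> coset LL b"
  proof -
    from xb obtain i where i: "i \<in> LL" "x = b + i" unfolding coset_mem by blast
    have "a + (i - (a - b)) = b + i" by (simp add: algebra_simps)
    then have e: "x = a + (i - (a - b))" using i(2) by simp
    have "i - (a - b) \<in> LL" using ab i(1) LL_sub dv.subspace_diff by blast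
    then show ?thesis unfolding coset_mem using e by blast
  qed
  show "x \<in> coset LL a \<longleftrightarrow> x \<in> coset LL b" using 1 2 by blast
qed

definition Fq :: "('g \<times> 'g \<times> 'g) set \<Rightarrow> 'g" where "Fq A = pi (SOME a. a \<in> A)"

lemma Fq_coset: "Fq (coset LL a) = pi a"
proof -
  have "(SOME x. x \<in> coset LL a) \<in> coset LL a" using coset_self by (rule someI)
  then obtain i where "i \<in> LL" "(SOME x. x \<in> coset LL a) = a + i" unfolding coset_mem by blast
  then show ?thesis unfolding Fq_def using pi_LL by (simp add: pi_add)
qed

lemma quot_add_coset: "quot_add LL (coset LL a) (coset LL b) = coset LL (a + b)"
proof (rule Set.set_eqI)
  fix x
  show "x \<in> quot_add LL (coset LL a) (coset LL b) \<longleftrightarrow> x \<in> coset LL (a + b)"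
  proof
    assume "x \<in> quot_add LL (coset LL a) (coset LL b)"
    then obtain a' b' i where ab': "a' \<in> coset LL a" "b' \<in> coset LL b" "i \<in> LL" "x = a' + b' + i"
      unfolding quot_add_def by blast
    from ab'(1) obtain i1 where "i1 \<in> LL" "a' = a + i1" unfolding coset_mem by blast
    moreover from ab'(2) obtain i2 where "i2 \<in> LL" "b' = b + i2" unfolding coset_mem by blast
    moreover note ab'
    ultimately have "x = (a + b) + (i1 + i2 + i)" "i1 + i2 + i \<in> LL"
      using LL_sub dv.subspace_add by (auto simp: algebra_simps)
    then show "x \<in> coset LL (a + b)" unfolding coset_mem by blast
  next
    assume "x \<in> coset LL (a + b)"
    then obtain i where "i \<in> LL" "x = a + b + i" unfolding coset_mem by blast
    then show "x \<in> quot_add LL (coset LL a) (coset LL b)"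
      unfolding quot_add_def using coset_self by blast
  qed
qed

lemma quot_scale_coset: "quot_scale (dscale sc) LL c (coset LL a) = coset LL (dscale sc c a)"
proof (rule Set.set_eqI)
  fix x
  show "x \<in> quot_scale (dscale sc) LL c (coset LL a) \<longleftrightarrow> x \<in> coset LL (dscale sc c a)"
  proof
    assume "x \<in> quot_scale (dscale sc) LL c (coset LL a)"
    then obtain a' i where ab': "a' \<in> coset LL a" "i \<in> LL" "x = dscale sc c a' + i"
      unfolding quot_scale_def by blast
    from ab'(1) obtain i1 where "i1 \<in> LL" "a' = a + i1" unfolding coset_mem by blast
    moreover note ab'
    ultimately have "x = dscale sc c a + (dscale sc c i1 + i)" "dscale sc c i1 + i \<in> LL"
      using LL_sub dv.subspace_add dv.subspace_scale by (auto simp: dv.scale_right_distrib algebra_simps)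
    then show "x \<in> coset LL (dscale sc c a)" unfolding coset_mem by blast
  next
    assume "x \<in> coset LL (dscale sc c a)"
    then obtain i where "i \<in> LL" "x = dscale sc c a + i" unfolding coset_mem by blast
    then show "x \<in> quot_scale (dscale sc) LL c (coset LL a)"
      unfolding quot_scale_def using coset_self by blast
  qed
qed

lemma quot_br_coset: assumes a: "a \<in> DS" and b: "b \<in> DS"
  shows "quot_br brd LL (coset LL a) (coset LL b) = coset LL (brd a b)"
proof (rule Set.set_eqI)
  fix x
  show "x \<in> quot_br brd LL (coset LL a) (coset LL b) \<longleftrightarrow> x \<in> coset LL (brd a b)"
  proof
    assume "x \<in> quot_br brd LL (coset LL a) (coset LL b)"
    then obtain a' b' i where ab': "a' \<in> coset LL a" "b' \<in> coset LL b" "i \<in> LL" "x = brd a' b' + i"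
      unfolding quot_br_def by blast
    from ab'(1) obtain i1 where i1: "i1 \<in> LL" "a' = a + i1" unfolding coset_mem by blast
    from ab'(2) obtain i2 where i2: "i2 \<in> LL" "b' = b + i2" unfolding coset_mem by blast
    have i12: "i1 \<in> LL" "a' = a + i1" "i2 \<in> LL" "b' = b + i2" using i1 i2 by auto
    note ab'
    moreover note i12
    moreover have "brd (a + i1) (b + i2) = brd a b"
    proof -
      have D: "i1 \<in> DS" "i2 \<in> DS" using i12 LL_DS by auto
      have z1: "brd a i2 = 0" "brd i1 i2 = 0" using brd_DS_LL a D i12 by auto
      have z2: "brd i1 b = 0" using brd_anti[OF D(1) b] brd_DS_LL[OF b i12(1)] by simp
      show ?thesis using a b D z1 z2 by (simp add: brd_addl brd_addr DS_add)
    qed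
    ultimately have "x = brd a b + i" by simp
    then show "x \<in> coset LL (brd a b)" unfolding coset_mem using \<open>i \<in> LL\<close> by blast
  next
    assume "x \<in> coset LL (brd a b)"
    then obtain i where "i \<in> LL" "x = brd a b + i" unfolding coset_mem by blast
    then show "x \<in> quot_br brd LL (coset LL a) (coset LL b)"
      unfolding quot_br_def using coset_self by blast
  qed
qed

lemma quot_iso: assumes u0: "\<forall>i<n. \<forall>j<n. u i j = 0"
  shows "lie_iso (quot_carrier DS LL) (quot_add LL) (quot_scale (dscale sc) LL) (quot_br brd LL) UNIV (+) sc br Fq"
  unfolding lie_iso_def
proof (intro conjI ballI allI)
  show "bij_betw Fq (quot_carrier DS LL) UNIV"
    unfolding bij_betw_def
  proof
    show "inj_on Fq (quot_carrier DS LL)"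
    proof (rule inj_onI)
      fix A B assume "A \<in> quot_carrier DS LL" "B \<in> quot_carrier DS LL" and e: "Fq A = Fq B"
      then obtain a b where ab: "a \<in> DS" "b \<in> DS" "A = coset LL a" "B = coset LL b"
        unfolding quot_carrier_def by blast
      have "pi (a - b) = 0" using e ab by (simp add: Fq_coset pi_diff)
      then have "a - b \<in> LL" using ker_LL[OF u0 DS_diff[OF ab(1,2)]] by simp
      then show "A = B" using ab coset_eq by simp
    qed
    show "Fq ` quot_carrier DS LL = UNIV"
    proof -
      have "z \<in> Fq ` quot_carrier DS LL" for z
      proof -
        have "z \<in> pi ` DS" using pi_surj_DS by simp
        then obtain v where v: "v \<in> DS" "z = pi v" by blast
        have "coset LL v \<in> quot_carrier DS LL" unfolding quot_carrier_def using v(1) by blast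
        then show ?thesis by (rule rev_image_eqI) (simp add: Fq_coset v(2))
      qed
      then show ?thesis by blast
    qed
  qed
next
  fix A B assume "A \<in> quot_carrier DS LL" "B \<in> quot_carrier DS LL"
  then obtain a b where ab: "a \<in> DS" "b \<in> DS" "A = coset LL a" "B = coset LL b"
    unfolding quot_carrier_def by blast
  show "Fq (quot_add LL A B) = Fq A + Fq B"
    unfolding ab quot_add_coset Fq_coset pi_add ..
  show "Fq (quot_br brd LL A B) = br (Fq A) (Fq B)"
    unfolding ab quot_br_coset[OF ab(1,2)] Fq_coset pi_hom_DS[OF u0 ab(1,2)] ..
next
  fix c A assume "A \<in> quot_carrier DS LL"
  then obtain a where ab: "a \<in> DS" "A = coset LL a" unfolding quot_carrier_def by blast
  show "Fq (quot_scale (dscale sc) LL c A) = sc c (Fq A)"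
    unfolding ab quot_scale_coset Fq_coset pi_scale ..
qed


section \<open>Maximal solvable ideal\<close>

lemma simple_ideals: "is_ideal UNIV sc br I \<Longrightarrow> I = {0} \<or> I = UNIV"
  using simple[unfolded simple_lie_def, THEN conjunct2, THEN conjunct2] by blast

lemma derived_UNIV: "derived sc br UNIV k = UNIV"
proof (induction k)
  case 0 then show ?case by simp
next
  case (Suc k)
  define W where "W = vs.span {br x y | x y. x \<in> (UNIV::'g set) \<and> y \<in> (UNIV::'g set)}"
  have "is_ideal UNIV sc br W"
    unfolding is_ideal_def is_subspace_eq W_def by (auto intro: vs.span_base)
  moreover have "W \<noteq> {0}"
  proof
    assume "W = {0}"
    obtain x y where "br x y \<noteq> 0" using br_nontriv by blast
    moreover have "br x y \<in> W" unfolding W_def by (rule vs.span_base) blast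
    ultimately show False using \<open>W = {0}\<close> by simp
  qed
  ultimately have "W = UNIV" using simple_ideals by blast
  then show ?case using Suc by (simp add: lin_span_eq W_def)
qed

lemma ideal_DS: "is_ideal DS (dscale sc) brd J \<Longrightarrow> J \<subseteq> DS" unfolding is_ideal_def by blast
lemma ideal_sub: "is_ideal DS (dscale sc) brd J \<Longrightarrow> dv.subspace J" unfolding is_ideal_def dis_subspace_eq by blast
lemma ideal_br: "is_ideal DS (dscale sc) brd J \<Longrightarrow> x \<in> DS \<Longrightarrow> y \<in> J \<Longrightarrow> brd x y \<in> J"
  unfolding is_ideal_def by blast

lemma derived_sub: assumes J: "is_ideal DS (dscale sc) brd J" shows "derived (dscale sc) brd J k \<subseteq> J"
proof (induction k)
  case 0 then show ?case by simp
next
  case (Suc k)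
  have "{brd x y | x y. x \<in> derived (dscale sc) brd J k \<and> y \<in> derived (dscale sc) brd J k} \<subseteq> J"
    using Suc ideal_DS[OF J] ideal_br[OF J] by blast
  then show ?case by (simp add: dlin_span_eq dv.span_minimal ideal_sub[OF J])
qed

lemma derived_pi: assumes u0: "\<forall>i<n. \<forall>j<n. u i j = 0" and J: "is_ideal DS (dscale sc) brd J"
  shows "derived sc br (pi ` J) k \<subseteq> pi ` derived (dscale sc) brd J k"
proof (induction k)
  case 0 then show ?case by simp
next
  case (Suc k)
  let ?D1 = "derived sc br (pi ` J) k"
  let ?D2 = "derived (dscale sc) brd J k"
  have D2: "?D2 \<subseteq> DS" using derived_sub[OF J] ideal_DS[OF J] by blast
  have "{br x y | x y. x \<in> ?D1 \<and> y \<in> ?D1} \<subseteq> pi ` {brd a b | a b. a \<in> ?D2 \<and> b \<in> ?D2}"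
  proof
    fix z assume "z \<in> {br x y | x y. x \<in> ?D1 \<and> y \<in> ?D1}"
    then obtain x y where xy: "z = br x y" "x \<in> ?D1" "y \<in> ?D1" by blast
    then obtain a b where ab: "a \<in> ?D2" "b \<in> ?D2" "x = pi a" "y = pi b" using Suc by blast
    have aD: "a \<in> DS" "b \<in> DS" using ab D2 by auto
    have "z = pi (brd a b)" using pi_hom_DS[OF u0 aD] xy(1) ab(3,4) by simp
    then show "z \<in> pi ` {brd a b | a b. a \<in> ?D2 \<and> b \<in> ?D2}" using ab by blast
  qed
  then have "vs.span {br x y | x y. x \<in> ?D1 \<and> y \<in> ?D1} \<subseteq> vs.span (pi ` {brd a b | a b. a \<in> ?D2 \<and> b \<in> ?D2})"
    by (rule vs.span_mono)
  also have "\<dots> = pi ` dv.span {brd a b | a b. a \<in> ?D2 \<and> b \<in> ?D2}"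
    by (rule module_hom.span_image[OF pi_mh])
  finally show ?case by (simp add: lin_span_eq dlin_span_eq)
qed

lemma max_solv: assumes u0: "\<forall>i<n. \<forall>j<n. u i j = 0"
  shows "max_solvable_ideal DS (dscale sc) brd LL"
  unfolding max_solvable_ideal_def
proof (intro conjI allI impI)
  show "is_ideal DS (dscale sc) brd LL" by (rule LL_ideal)
  show "solvable (dscale sc) brd LL" by (rule LL_solvable)
  fix J assume "is_ideal DS (dscale sc) brd J \<and> solvable (dscale sc) brd J"
  then have J: "is_ideal DS (dscale sc) brd J" and sol: "solvable (dscale sc) brd J" by auto
  have JD: "J \<subseteq> DS" using ideal_DS[OF J] .
  have pJ: "is_ideal UNIV sc br (pi ` J)"
    unfolding is_ideal_def is_subspace_eq
  proof (intro conjI ballI)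
    show "pi ` J \<subseteq> UNIV" by simp
    show "vs.subspace (pi ` J)" by (rule module_hom.subspace_image[OF pi_mh ideal_sub[OF J]])
    fix x y assume y: "y \<in> pi ` J"
    have "x \<in> pi ` DS" using pi_surj_DS by simp
    then obtain v where v: "v \<in> DS" "x = pi v" by blast
    obtain j where j: "j \<in> J" "y = pi j" using y by blast
    have jD: "j \<in> DS" using j JD by auto
    have "br x y = pi (brd v j)" using pi_hom_DS[OF u0 v(1) jD] v(2) j(2) by simp
    moreover have "brd v j \<in> J" using ideal_br[OF J v(1) j(1)] .
    ultimately show "br x y \<in> pi ` J" by blast
  qed
  have "pi ` J \<noteq> UNIV"
  proof
    assume U: "pi ` J = UNIV"
    obtain k where k: "derived (dscale sc) brd J k = {0}" using sol unfolding solvable_def by blast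
    have "(UNIV::'g set) \<subseteq> pi ` {0}" using derived_pi[OF u0 J, of k] U k derived_UNIV by simp
    then have "\<forall>z::'g. z = 0" using pi_0 by auto
    then show False using br_nontriv by blast
  qed
  then have "pi ` J = {0}" using simple_ideals[OF pJ] by blast
  then show "J \<subseteq> LL" using ker_LL[OF u0] JD by blast
qed

end

theorem mainTheorem1:
  fixes n :: nat and C :: "nat \<Rightarrow> nat \<Rightarrow> int" and d :: "nat \<Rightarrow> nat"
    and u :: "nat \<Rightarrow> nat \<Rightarrow> complex"
    and sc :: "complex \<Rightarrow> 'g::ab_group_add \<Rightarrow> 'g" and br :: "'g \<Rightarrow> 'g \<Rightarrow> 'g"
    and hh xp xm :: "nat \<Rightarrow> 'g"
    and brd :: "'g \<times> 'g \<times> 'g \<Rightarrow> 'g \<times> 'g \<times> 'g \<Rightarrow> 'g \<times> 'g \<times> 'g"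
  assumes cartan: "gcm_finite_type_sym n C d"
    and vs: "vector_space sc"
    and findim: "\<exists>B. finite B \<and> lin_span sc B = UNIV"
    and simple: "simple_lie sc br"
    and gens: "chevalley_serre n C sc br hh xp xm"
    and u_skew: "\<forall>i<n. \<forall>j<n. u i j = - u j i"
    and brd: "d_bracket n C d u sc br hh brd"
  defines "D \<equiv> dset n C sc br hh"
    and "l \<equiv> lin_span (dscale sc)
               {hD n C d sc hh lam - kD n C d sc hh lam | lam. lam \<in> rad_u n u sc hh}"
    and "m \<equiv> lin_span (dscale sc)
               ({xD x | x \<alpha>. is_root n sc br hh \<alpha> \<and> x \<in> rootspace n sc br hh \<alpha>}
                \<union> {hD n C d sc hh lam + kD n C d sc hh lam | lam. lam \<in> hdual n sc hh})"
  shows "(is_ideal D (dscale sc) brd l \<and> solvable (dscale sc) brd l)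
       \<and> ((\<forall>i<n. \<forall>j<n. u i j = 0) \<longrightarrow>
            max_solvable_ideal D (dscale sc) brd l
          \<and> (\<exists>f. lie_iso (quot_carrier D l) (quot_add l) (quot_scale (dscale sc) l) (quot_br brd l)
                         UNIV (+) sc br f))
       \<and> is_ideal D (dscale sc) brd m
       \<and> (\<exists>f. lie_iso m (+) (dscale sc) brd UNIV (+) sc br f)"
proof -
  interpret cs sc n C d u br hh xp xm brd
    by (rule cs.intro[OF vs]) (rule cs_axioms.intro; fact)
  have l_eq: "l = LL" unfolding l_def LL_def LG_def dlin_span_eq ..
  have m_eq: "m = MM" unfolding m_def MM_def MG_def dlin_span_eq ..
  have D_eq: "D = DS" unfolding D_def ..
  show ?thesis unfolding l_eq m_eq D_eq
    using LL_ideal LL_solvable max_solv quot_iso MM_ideal MM_iso by blast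
qed

end
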